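(* Let $\mathcal P=(P_1,\dots,P_k)$ be a hinge in $V=\mathbb C^n$ and fix $m\in\{0,1,\dots,n\}$. Consider the operators $\lambda^m(P_1),\dots,\lambda^m(P_k):\Lambda^mV\to\Lambda^mV$. Then exactly one of the following holds: (1) there is a unique $j$ with $\lambda^m(P_j)\neq0$; (2) there is $j$ such that $\lambda^m(P_j)\neq0$, $\lambda^m(P_{j+1})\ne0$ and $\lambda^m(P_t)=0$ for all $t\ne j,j+1$; in this case $\lambda^m(P_j)$ and $\lambda^m(P_{j+1})$ have rank $1$, coincide up to a nonzero factor, and also coincide (up to a nonzero factor) with $\lambda^m(Q_j)$, where $Q_j=\mathrm{Ker}\,P_j\oplus\mathrm{Im}\,P_j$.
   Context: A linear relation is a subspace $P\subset V\oplus V$. $\mathrm{Ker}\,P=\{v: v\oplus0\in P\}$, $\mathrm{Dom}\,P$ and $\mathrm{Im}\,P$ are the projections of $P$ to the first and second summands, $\mathrm{Indef}\,P=\{w:0\oplus w\in P\}$, $\mathrm{rk}\,P=\dim\mathrm{Dom}\,P-\dim\mathrm{Ker}\,P$. If $\dim P=n$, there exist bases $f_1,\dots,f_a,g_1,\dots,g_b,h_1,\dots,h_c$ and $F_1,\dots,F_a,G_1,\dots,G_b,H_1,\dots,H_c$ of $V$ such that $P$ is spanned by $0\oplus F_i$, $g_j\oplus G_j$, $h_k\oplus0$; $\lambda(P):\Lambda V\to\Lambda V$ sends $f_1\wedge\dots\wedge f_a\wedge g_{i_1}\wedge\dots\wedge g_{i_s}$ ($i_1<\dots<i_s$) to $F_1\wedge\dots\wedge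 F_a\wedge G_{i_1}\wedge\dots\wedge G_{i_s}$ and annihilates the other wedge monomials in the basis $f,g,h$; it is defined up to a nonzero scalar, and $\lambda^m(P)$ is its restriction to $\Lambda^mV$. A hinge is a sequence $(P_1,\dots,P_k)$ of $n$-dimensional linear relations such that $\mathrm{Ker}\,P_j=\mathrm{Dom}\,P_{j+1}$ and $\mathrm{Im}\,P_j=\mathrm{Indef}\,P_{j+1}$ for $1\le j\le k-1$, $\mathrm{Dom}\,P_1=V$, $\mathrm{Im}\,P_k=V$, and $\mathrm{rk}\,P_j>0$ for all $j$. *)

theory Defs
  imports "HOL-Analysis.Analysis" "HOL-Library.Function_Algebras"
begin

text \<open>Complex vector spaces are modelled as function spaces 'a => complex with
pointwise operations. V = C^n is 'n => complex with n = CARD('n);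
V (+) V is ('n + 'n) => complex; the exterior power Lambda^m V is modelled
inside 'n list => complex (wedge monomials = families of m x m minors).\<close>

definition fscale :: "complex \<Rightarrow> ('a \<Rightarrow> complex) \<Rightarrow> ('a \<Rightarrow> complex)" where
  "fscale c v = (\<lambda>i. c * v i)"

definition cspan :: "('a \<Rightarrow> complex) set \<Rightarrow> ('a \<Rightarrow> complex) set" where
  "cspan S = module.span fscale S"

definition csubspace :: "('a \<Rightarrow> complex) set \<Rightarrow> bool" where
  "csubspace S = module.subspace fscale S"

definition cindependent :: "('a \<Rightarrow> complex) set \<Rightarrow> bool" where
  "cindependent S = (\<not> module.dependent fscale S)"

definition cdim :: "('a \<Rightarrow> complex) set \<Rightarrow> nat" where
  "cdim S = vector_space.dim fscale S"

definition cbasis :: "nat \<Rightarrow> (nat \<Rightarrow> ('a \<Rightarrow> complex)) \<Rightarrow> bool" where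
  "cbasis n e \<longleftrightarrow> inj_on e {..<n} \<and> cindependent (e ` {..<n}) \<and> cspan (e ` {..<n}) = UNIV"

definition dsum :: "('n \<Rightarrow> complex) \<Rightarrow> ('n \<Rightarrow> complex) \<Rightarrow> ('n + 'n \<Rightarrow> complex)" where
  "dsum v w = (\<lambda>x. case x of Inl i \<Rightarrow> v i | Inr i \<Rightarrow> w i)"

definition linrel :: "('n + 'n \<Rightarrow> complex) set \<Rightarrow> bool" where
  "linrel P \<longleftrightarrow> csubspace P"

definition Ker :: "('n + 'n \<Rightarrow> complex) set \<Rightarrow> ('n \<Rightarrow> complex) set" where
  "Ker P = {v. dsum v 0 \<in> P}"

definition Dom :: "('n + 'n \<Rightarrow> complex) set \<Rightarrow> ('n \<Rightarrow> complex) set" where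
  "Dom P = {v. \<exists>w. dsum v w \<in> P}"

definition Im :: "('n + 'n \<Rightarrow> complex) set \<Rightarrow> ('n \<Rightarrow> complex) set" where
  "Im P = {w. \<exists>v. dsum v w \<in> P}"

definition Indef :: "('n + 'n \<Rightarrow> complex) set \<Rightarrow> ('n \<Rightarrow> complex) set" where
  "Indef P = {w. dsum 0 w \<in> P}"

definition rk :: "('n + 'n \<Rightarrow> complex) set \<Rightarrow> nat" where
  "rk P = cdim (Dom P) - cdim (Ker P)"

text \<open>Wedge product vs 0 /\ ... /\ vs (m-1), represented by its coordinates:
at a list of indices is of length m, the minor det [vs i (is ! j)]_{i,j<m}.\<close>
definition wedge :: "nat \<Rightarrow> (nat \<Rightarrow> ('n \<Rightarrow> complex)) \<Rightarrow> ('n list \<Rightarrow> complex)" where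
  "wedge m vs = (\<lambda>is. if length is = m then
      (\<Sum>\<sigma>\<in>{\<sigma>. \<sigma> permutes {..<m}}. of_int (sign \<sigma>) * (\<Prod>i<m. vs i (is ! \<sigma> i)))
     else 0)"

definition ext :: "nat \<Rightarrow> ('n list \<Rightarrow> complex) set" where
  "ext m = cspan {wedge m vs | vs. True}"

definition mono :: "(nat \<Rightarrow> ('n \<Rightarrow> complex)) \<Rightarrow> nat set \<Rightarrow> ('n list \<Rightarrow> complex)" where
  "mono e S = wedge (card S) (\<lambda>i. e (sorted_list_of_set S ! i))"

definition lin_on :: "('a \<Rightarrow> complex) set \<Rightarrow> (('a \<Rightarrow> complex) \<Rightarrow> ('b \<Rightarrow> complex)) \<Rightarrow> bool" where
  "lin_on S L \<longleftrightarrow> (\<forall>x\<in>S. \<forall>y\<in>S. L (x + y) = L x + L y) \<and>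
                   (\<forall>c. \<forall>x\<in>S. L (fscale c x) = fscale c (L x))"

text \<open>L is (a choice of) lambda^m(P): there are bases f_1..f_a, g_1..g_b, h_1..h_c
(= e 0..e(a-1), e a..e(a+b-1), e(a+b)..e(n-1)) and F, G, H (= E at the same indices)
of V with P = span of 0(+)F_i, g_j(+)G_j, h_k(+)0, and L is the linear operator
on Lambda^m V sending f_1/\../\f_a/\g_{i_1}/\../\g_{i_s} to F_1/\../\F_a/\G_{i_1}/\../\G_{i_s}
and killing all other wedge monomials of degree m in the basis f, g, h.\<close>
definition lambda_m :: "nat \<Rightarrow> ('n::finite + 'n \<Rightarrow> complex) set \<Rightarrow>
    (('n list \<Rightarrow> complex) \<Rightarrow> ('n list \<Rightarrow> complex)) \<Rightarrow> bool" where
  "lambda_m m P L \<longleftrightarrow> (\<exists>e E a b. a + b \<le> CARD('n) \<and> cbasis CARD('n) e \<and> cbasis CARD('n) E \<and>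
     P = cspan ({dsum 0 (E i) | i. i < a} \<union> {dsum (e i) (E i) | i. a \<le> i \<and> i < a + b}
                \<union> {dsum (e i) 0 | i. a + b \<le> i \<and> i < CARD('n)}) \<and>
     lin_on (ext m) L \<and>
     (\<forall>S. S \<subseteq> {..<CARD('n)} \<and> card S = m \<longrightarrow>
        L (mono e S) = (if {..<a} \<subseteq> S \<and> S \<subseteq> {..<a + b} then mono E S else 0)))"

definition hinge :: "(nat \<Rightarrow> ('n::finite + 'n \<Rightarrow> complex) set) \<Rightarrow> nat \<Rightarrow> bool" where
  "hinge Ps k \<longleftrightarrow> k \<ge> 1 \<and>
     (\<forall>j\<in>{1..k}. linrel (Ps j) \<and> cdim (Ps j) = CARD('n) \<and> rk (Ps j) > 0) \<and>
     (\<forall>j. 1 \<le> j \<and> j + 1 \<le> k \<longrightarrow> Ker (Ps j) = Dom (Ps (j + 1)) \<and> Im (Ps j) = Indef (Ps (j + 1))) \<and>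
     Dom (Ps 1) = UNIV \<and> Im (Ps k) = UNIV"

definition KerIm :: "('n + 'n \<Rightarrow> complex) set \<Rightarrow> ('n + 'n \<Rightarrow> complex) set" where
  "KerIm P = {dsum v w | v w. v \<in> Ker P \<and> w \<in> Im P}"

definition op_nonzero :: "nat \<Rightarrow> (('n list \<Rightarrow> complex) \<Rightarrow> ('n list \<Rightarrow> complex)) \<Rightarrow> bool" where
  "op_nonzero m L \<longleftrightarrow> (\<exists>w\<in>ext m. L w \<noteq> 0)"

definition op_rank :: "nat \<Rightarrow> (('n list \<Rightarrow> complex) \<Rightarrow> ('n list \<Rightarrow> complex)) \<Rightarrow> nat" where
  "op_rank m L = cdim (L ` ext m)"

definition op_propto :: "nat \<Rightarrow> (('n list \<Rightarrow> complex) \<Rightarrow> ('n list \<Rightarrow> complex)) \<Rightarrow>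
    (('n list \<Rightarrow> complex) \<Rightarrow> ('n list \<Rightarrow> complex)) \<Rightarrow> bool" where
  "op_propto m L L' \<longleftrightarrow> (\<exists>c. c \<noteq> 0 \<and> (\<forall>w\<in>ext m. L w = fscale c (L' w)))"

end

theory Submission
  imports Defs
begin


lemma fscale_apply: "fscale c v i = c * v i" by (simp add: fscale_def)

interpretation fs: vector_space "fscale :: complex \<Rightarrow> ('a \<Rightarrow> complex) \<Rightarrow> ('a \<Rightarrow> complex)"
  by unfold_locales (auto simp: fscale_def fun_eq_iff algebra_simps)

lemma cspan_eq: "cspan = fs.span" by (simp add: cspan_def fun_eq_iff)
lemma cdim_eq: "cdim = fs.dim" by (simp add: cdim_def fun_eq_iff)
lemma cindep_eq: "cindependent S = fs.independent S" by (simp add: cindependent_def)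

lemma wedge_cong: "(\<And>i. i < m \<Longrightarrow> vs i = ws i) \<Longrightarrow> wedge m vs = wedge m ws"
  unfolding wedge_def by (intro ext if_cong refl sum.cong) (auto intro!: prod.cong)

lemma wedge_apply: "length is = m \<Longrightarrow> wedge m vs is =
   (\<Sum>\<sigma>\<in>{\<sigma>. \<sigma> permutes {..<m}}. of_int (sign \<sigma>) * (\<Prod>i<m. vs i (is ! \<sigma> i)))"
  by (simp add: wedge_def)

lemma wedge_permute:
  assumes p: "\<pi> permutes {..<m}"
  shows "wedge m (\<lambda>i. vs (\<pi> i)) = fscale (of_int (sign \<pi>)) (wedge m vs)"
proof (rule ext)
  fix "is"
  show "wedge m (\<lambda>i. vs (\<pi> i)) is = fscale (of_int (sign \<pi>)) (wedge m vs) is"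
  proof (cases "length is = m")
    case False thus ?thesis by (simp add: wedge_def fscale_def)
  next
    case True
    let ?P = "{\<sigma>. \<sigma> permutes {..<m}}"
    have pi: "inv \<pi> permutes {..<m}" using p by (rule permutes_inv)
    have "wedge m (\<lambda>i. vs (\<pi> i)) is =
      (\<Sum>\<sigma>\<in>?P. of_int (sign \<sigma>) * (\<Prod>i<m. vs i (is ! \<sigma> (inv \<pi> i))))"
    proof -
      have "(\<Prod>i<m. vs (\<pi> i) (is ! \<sigma> i)) = (\<Prod>i<m. vs i (is ! \<sigma> (inv \<pi> i)))" for \<sigma>
      proof -
        have "(\<Prod>i<m. vs i (is ! \<sigma> (inv \<pi> i))) = (\<Prod>i<m. vs (\<pi> i) (is ! \<sigma> (inv \<pi> (\<pi> i))))"
          using prod.permute[OF p, of "\<lambda>i. vs i (is ! \<sigma> (inv \<pi> i))"] by (simp add: comp_def)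
        also have "\<dots> = (\<Prod>i<m. vs (\<pi> i) (is ! \<sigma> i))"
          using permutes_inverses(2)[OF p] by simp
        finally show ?thesis by simp
      qed
      thus ?thesis using True by (simp add: wedge_def)
    qed
    also have "\<dots> = (\<Sum>\<tau>\<in>?P. of_int (sign (\<tau> \<circ> \<pi>)) * (\<Prod>i<m. vs i (is ! \<tau> i)))"
    proof -
      have bij: "bij_betw (\<lambda>\<tau>. \<tau> \<circ> \<pi>) ?P ?P"
      proof (rule bij_betwI[where g = "\<lambda>\<sigma>. \<sigma> \<circ> inv \<pi>"])
        show "(\<lambda>\<tau>. \<tau> \<circ> \<pi>) \<in> ?P \<rightarrow> ?P" using p by (auto intro: permutes_compose)
        show "(\<lambda>\<sigma>. \<sigma> \<circ> inv \<pi>) \<in> ?P \<rightarrow> ?P" using pi by (auto intro: permutes_compose)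
        show "\<And>x. x \<in> ?P \<Longrightarrow> x \<circ> \<pi> \<circ> inv \<pi> = x"
          using permutes_inverses[OF p] by (auto simp: fun_eq_iff)
        show "\<And>x. x \<in> ?P \<Longrightarrow> x \<circ> inv \<pi> \<circ> \<pi> = x"
          using permutes_inverses[OF p] by (auto simp: fun_eq_iff)
      qed
      have "(\<Sum>\<tau>\<in>?P. of_int (sign (\<tau> \<circ> \<pi>)) * (\<Prod>i<m. vs i (is ! \<tau> i))) =
         (\<Sum>\<sigma>\<in>?P. of_int (sign (\<sigma> \<circ> inv \<pi> \<circ> \<pi>)) * (\<Prod>i<m. vs i (is ! (\<sigma> \<circ> inv \<pi>) i)))"
        apply (rule sum.reindex_bij_witness[where i="\<lambda>\<sigma>. \<sigma> \<circ> inv \<pi>" and j = "\<lambda>\<tau>. \<tau> \<circ> \<pi>"])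
        using permutes_inverses[OF p] p pi
        by (auto simp: o_def intro: permutes_compose[unfolded o_def])
      also have "\<dots> = (\<Sum>\<sigma>\<in>?P. of_int (sign \<sigma>) * (\<Prod>i<m. vs i (is ! \<sigma> (inv \<pi> i))))"
        using permutes_inverses[OF p] by (simp add: comp_def)
      finally show ?thesis by simp
    qed
    also have "\<dots> = of_int (sign \<pi>) * (\<Sum>\<tau>\<in>?P. of_int (sign \<tau>) * (\<Prod>i<m. vs i (is ! \<tau> i)))"
      unfolding sum_distrib_left
      proof (rule sum.cong)
        fix x assume "x \<in> ?P"
        hence "sign (x \<circ> \<pi>) = sign \<pi> * sign x" using p
          by (metis sign_compose permutation_permutes finite_lessThan mult.commute mem_Collect_eq)
        thus "of_int (sign (x \<circ> \<pi>)) * (\<Prod>i<m. vs i (is ! x i)) =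
          of_int (sign \<pi>) * (of_int (sign x) * (\<Prod>i<m. vs i (is ! x i)))" by simp
      qed simp
    also have "\<dots> = fscale (of_int (sign \<pi>)) (wedge m vs) is"
      by (simp only: fscale_def wedge_apply[OF True])
    finally show ?thesis .
  qed
qed


lemma wedge_repeat:
  assumes "i < m" "j < m" "i \<noteq> j" "vs i = vs j"
  shows "wedge m vs = 0"
proof -
  have p: "Transposition.transpose i j permutes {..<m}" using assms by (intro permutes_swap_id) auto
  have "(\<lambda>k. vs (Transposition.transpose i j k)) = vs"
    by (rule ext, simp add: Transposition.transpose_def, metis assms(4))
  hence "wedge m vs = fscale (-1) (wedge m vs)"
    using wedge_permute[OF p, of vs] assms by (simp add: sign_swap_id)
  thus ?thesis by (auto simp: fun_eq_iff fscale_def)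
qed

lemma prod_upd_remove:
  fixes k m :: nat
  assumes "k < m"
  shows "(\<Prod>i<m. (vs(k := z)) i (g i)) = z (g k) * (\<Prod>i\<in>{..<m} - {k}. vs i (g i))"
proof -
  have "(\<Prod>i<m. (vs(k := z)) i (g i)) = (vs(k := z)) k (g k) * (\<Prod>i\<in>{..<m} - {k}. (vs(k := z)) i (g i))"
    using assms by (subst prod.remove[OF finite_lessThan, of k]) auto
  also have "(\<Prod>i\<in>{..<m} - {k}. (vs(k := z)) i (g i)) = (\<Prod>i\<in>{..<m} - {k}. vs i (g i))"
    by (rule prod.cong) auto
  finally show ?thesis by simp
qed

lemma wedge_upd_add:
  assumes "k < m"
  shows "wedge m (vs(k := x + y)) = wedge m (vs(k := x)) + wedge m (vs(k := y))"
proof (rule ext)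
  fix "is"
  show "wedge m (vs(k := x + y)) is = (wedge m (vs(k := x)) + wedge m (vs(k := y))) is"
  proof (cases "length is = m")
    case True
    show ?thesis using True unfolding wedge_def prod_upd_remove[OF assms]
      by (simp add: algebra_simps sum.distrib[symmetric])
  qed (simp add: wedge_def)
qed

lemma wedge_upd_scale:
  assumes "k < m"
  shows "wedge m (vs(k := fscale c x)) = fscale c (wedge m (vs(k := x)))"
proof (rule ext)
  fix "is"
  show "wedge m (vs(k := fscale c x)) is = fscale c (wedge m (vs(k := x))) is"
  proof (cases "length is = m")
    case True
    show ?thesis using True unfolding wedge_def prod_upd_remove[OF assms]
      by (simp add: fscale_def algebra_simps sum_distrib_left)
  qed (simp add: wedge_def fscale_def)
qed

lemma wedge_upd_zero:
  assumes "k < m"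
  shows "wedge m (vs(k := 0)) = 0"
proof -
  have "wedge m (vs(k := fscale 0 0)) = fscale 0 (wedge m (vs(k := 0)))"
    by (rule wedge_upd_scale[OF assms])
  moreover have "fscale 0 (0 :: 'a \<Rightarrow> complex) = 0" "\<And>w :: 'b \<Rightarrow> complex. fscale 0 w = 0"
    by (auto simp: fscale_def fun_eq_iff)
  ultimately show ?thesis by simp
qed

lemma wedge_upd_span:
  assumes "k < m" "x \<in> fs.span X"
  shows "wedge m (vs(k := x)) \<in> fs.span ((\<lambda>y. wedge m (vs(k := y))) ` X)"
  using assms(2)
proof (induction rule: fs.span_induct_alt)
  case base
  show ?case by (simp only: wedge_upd_zero[OF assms(1)] fs.span_zero)
next
  case (step c x y)
  have eq: "wedge m (vs(k := fscale c x + y)) = fscale c (wedge m (vs(k := x))) + wedge m (vs(k := y))"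
    by (simp add: wedge_upd_add[OF assms(1)] wedge_upd_scale[OF assms(1)])
  show ?case unfolding eq
    apply (rule fs.span_add)
     apply (rule fs.span_scale, rule fs.span_base, rule imageI, rule step(1))
    apply (rule step(2))
    done
qed

lemma span_subset_span: "A \<subseteq> fs.span B \<Longrightarrow> fs.span A \<subseteq> fs.span B"
  by (simp add: fs.span_minimal)

lemma wedge_expand_k:
  assumes "k \<le> m" "\<forall>i<k. vs i \<in> fs.span (e ` A i)"
  shows "wedge m vs \<in> fs.span {wedge m ws | ws. (\<forall>i<k. \<exists>t\<in>A i. ws i = e t) \<and> (\<forall>i. k \<le> i \<longrightarrow> ws i = vs i)}"
  using assms
proof (induction k arbitrary: vs)
  case 0
  show ?case by (rule fs.span_base) auto
next
  case (Suc k)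
  let ?T = "{wedge m ws | ws. (\<forall>i<Suc k. \<exists>t\<in>A i. ws i = e t) \<and> (\<forall>i. Suc k \<le> i \<longrightarrow> ws i = vs i)}"
  have km: "k < m" using Suc by simp
  have "wedge m (vs(k := vs k)) \<in> fs.span ((\<lambda>y. wedge m (vs(k := y))) ` (e ` A k))"
    using Suc.prems by (intro wedge_upd_span km) auto
  hence 1: "wedge m vs \<in> fs.span ((\<lambda>y. wedge m (vs(k := y))) ` (e ` A k))" by simp
  have "(\<lambda>y. wedge m (vs(k := y))) ` (e ` A k) \<subseteq> fs.span ?T"
  proof safe
    fix t assume t: "t \<in> A k"
    have a1: "wedge m (vs(k := e t)) \<in> fs.span {wedge m ws | ws. (\<forall>i<k. \<exists>t\<in>A i. ws i = e t) \<and> (\<forall>i. k \<le> i \<longrightarrow> ws i = (vs(k := e t)) i)}"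
      using Suc.prems by (intro Suc.IH) auto
    have a2: "{wedge m ws | ws. (\<forall>i<k. \<exists>t\<in>A i. ws i = e t) \<and> (\<forall>i. k \<le> i \<longrightarrow> ws i = (vs(k := e t)) i)} \<subseteq> ?T"
    proof safe
      fix ws assume h: "\<forall>i<k. \<exists>t\<in>A i. ws i = e t" "\<forall>i. k \<le> i \<longrightarrow> ws i = (vs(k := e t)) i"
      have "\<forall>i<Suc k. \<exists>t\<in>A i. ws i = e t"
      proof (intro allI impI)
        fix i assume "i < Suc k"
        thus "\<exists>t\<in>A i. ws i = e t" using h t by (cases "i = k") auto
      qed
      moreover have "\<forall>i. Suc k \<le> i \<longrightarrow> ws i = vs i" using h by auto
      ultimately show "\<exists>ws'. wedge m ws = wedge m ws' \<and> (\<forall>i<Suc k. \<exists>t\<in>A i. ws' i = e t) \<and> (\<forall>i. Suc k \<le> i \<longrightarrow> ws' i = vs i)"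
        by blast
    qed
    show "wedge m (vs(k := e t)) \<in> fs.span ?T" using fs.span_mono[OF a2] a1 by (rule subsetD)
  qed
  hence "fs.span ((\<lambda>y. wedge m (vs(k := y))) ` (e ` A k)) \<subseteq> fs.span ?T" by (rule span_subset_span)
  from subsetD[OF this 1] show ?case .
qed

lemma wedge_expand:
  assumes "\<forall>i<m. vs i \<in> fs.span (e ` A i)"
  shows "wedge m vs \<in> fs.span {wedge m (\<lambda>i. e (f i)) | f. \<forall>i<m. f i \<in> A i}"
proof -
  have b1: "wedge m vs \<in> fs.span {wedge m ws | ws. (\<forall>i<m. \<exists>t\<in>A i. ws i = e t) \<and> (\<forall>i. m \<le> i \<longrightarrow> ws i = vs i)}"
    using assms by (intro wedge_expand_k) auto
  have b2: "{wedge m ws | ws. (\<forall>i<m. \<exists>t\<in>A i. ws i = e t) \<and> (\<forall>i. m \<le> i \<longrightarrow> ws i = vs i)}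
     \<subseteq> {wedge m (\<lambda>i. e (f i)) | f. \<forall>i<m. f i \<in> A i}"
  proof safe
    fix ws assume h: "\<forall>i<m. \<exists>t\<in>A i. ws i = e t"
    define f where "f i = (SOME t. t \<in> A i \<and> ws i = e t)" for i
    have "\<forall>i<m. f i \<in> A i \<and> ws i = e (f i)"
      using h unfolding f_def by (metis (mono_tags, lifting) someI_ex)
    thus "\<exists>f. wedge m ws = wedge m (\<lambda>i. e (f i)) \<and> (\<forall>i<m. f i \<in> A i)"
      by (intro exI[of _ f]) (auto intro: wedge_cong)
  qed
  from subsetD[OF fs.span_mono[OF b2] b1] show ?thesis .
qed

lemma mono_def': "mono e S = wedge (card S) (\<lambda>i. e (sorted_list_of_set S ! i))"
  by (simp add: mono_def)

lemma wedge_inj: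
  assumes inj: "inj_on f {..<m}"
  shows "\<exists>c. wedge m (\<lambda>i. e (f i)) = fscale c (mono e (f ` {..<m}))"
proof -
  define T where "T = f ` {..<m}"
  have cT: "card T = m" using inj by (simp add: T_def card_image)
  have fT: "finite T" by (simp add: T_def)
  define s where "s = sorted_list_of_set T"
  have ls: "length s = m" "distinct s" "set s = T" using cT fT by (auto simp: s_def)
  have bs: "bij_betw ((!) s) {..<m} T" using ls by (intro bij_betw_nth) auto
  have bf: "bij_betw f {..<m} T" using inj by (simp add: T_def bij_betw_def)
  define \<pi> where "\<pi> i = (if i < m then inv_into {..<m} ((!) s) (f i) else i)" for i
  have b1: "bij_betw (inv_into {..<m} ((!) s) \<circ> f) {..<m} {..<m}"
    using bij_betw_trans[OF bf bij_betw_inv_into[OF bs]] .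
  have "bij_betw \<pi> {..<m} {..<m} = bij_betw (inv_into {..<m} ((!) s) \<circ> f) {..<m} {..<m}"
    by (rule bij_betw_cong) (simp add: \<pi>_def)
  with b1 have "bij_betw \<pi> {..<m} {..<m}" by simp
  hence p: "\<pi> permutes {..<m}" by (rule bij_imp_permutes) (simp add: \<pi>_def)
  have sp: "s ! \<pi> i = f i" if "i < m" for i
  proof -
    have "f i \<in> T" using that by (simp add: T_def)
    hence "f i \<in> (!) s ` {..<m}" using bs by (simp add: bij_betw_def)
    thus ?thesis using that by (simp add: \<pi>_def f_inv_into_f)
  qed
  have "wedge m (\<lambda>i. e (f i)) = wedge m (\<lambda>i. (\<lambda>j. e (s ! j)) (\<pi> i))"
    by (rule wedge_cong) (simp add: sp)
  also have "\<dots> = fscale (of_int (sign \<pi>)) (wedge m (\<lambda>j. e (s ! j)))"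
    by (rule wedge_permute[OF p])
  also have "wedge m (\<lambda>j. e (s ! j)) = mono e T" by (simp add: mono_def cT s_def)
  finally have "wedge m (\<lambda>i. e (f i)) = fscale (of_int (sign \<pi>)) (mono e T)" .
  thus ?thesis unfolding T_def by (rule exI)
qed

lemma wedge_expand_mono:
  assumes "\<forall>i<m. vs i \<in> fs.span (e ` A i)"
  shows "wedge m vs \<in> fs.span {mono e (f ` {..<m}) | f. inj_on f {..<m} \<and> (\<forall>i<m. f i \<in> A i)}"
proof -
  let ?M = "{mono e (f ` {..<m}) | f. inj_on f {..<m} \<and> (\<forall>i<m. f i \<in> A i)}"
  have "{wedge m (\<lambda>i. e (f i)) | f. \<forall>i<m. f i \<in> A i} \<subseteq> fs.span ?M"
  proof
    fix w assume "w \<in> {wedge m (\<lambda>i. e (f i)) | f. \<forall>i<m. f i \<in> A i}"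
    then obtain f where w: "w = wedge m (\<lambda>i. e (f i))" and f: "\<forall>i<m. f i \<in> A i" by blast
    show "w \<in> fs.span ?M"
    proof (cases "inj_on f {..<m}")
      case True
      then obtain c where c: "wedge m (\<lambda>i. e (f i)) = fscale c (mono e (f ` {..<m}))"
        using wedge_inj by blast
      have "mono e (f ` {..<m}) \<in> ?M" using True f by blast
      hence "fscale c (mono e (f ` {..<m})) \<in> fs.span ?M" by (intro fs.span_scale fs.span_base)
      thus ?thesis using c w by simp
    next
      case False
      then obtain i j where ij: "i < m" "j < m" "i \<noteq> j" "f i = f j" unfolding inj_on_def by blast
      have "wedge m (\<lambda>i. e (f i)) = 0" by (rule wedge_repeat[OF ij(1-3)]) (simp add: ij(4))
      thus ?thesis using w fs.span_zero by simp
    qed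
  qed
  from subsetD[OF span_subset_span[OF this] wedge_expand[OF assms]] show ?thesis .
qed



lemma sum_fun_apply: "(\<Sum>v\<in>t. g v) x = (\<Sum>v\<in>t. g v x)"
  by (induction t rule: infinite_finite_induct) (auto simp: plus_fun_def)

lemma ext_subspace: "fs.subspace (ext m)"
  by (simp add: ext_def cspan_eq)

lemma mono_in_ext: "card S = m \<Longrightarrow> mono e S \<in> ext m"
  unfolding ext_def cspan_eq mono_def by (rule fs.span_base) auto

lemma cbasis_span: "cbasis N e \<Longrightarrow> fs.span (e ` {..<N}) = UNIV"
  by (simp add: cbasis_def cspan_eq)

lemma cbasis_indep: "cbasis N e \<Longrightarrow> fs.independent (e ` {..<N})"
  by (simp add: cbasis_def cindep_eq)

lemma cbasis_inj: "cbasis N e \<Longrightarrow> inj_on e {..<N}"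
  by (simp add: cbasis_def)

lemma ext_spanned:
  assumes "cbasis N e"
  shows "ext m \<subseteq> fs.span {mono e S | S. S \<subseteq> {..<N} \<and> card S = m}"
  unfolding ext_def cspan_eq
proof (rule span_subset_span, safe)
  fix vs :: "nat \<Rightarrow> 'a \<Rightarrow> complex"
  have c1: "wedge m vs \<in> fs.span {mono e (f ` {..<m}) | f. inj_on f {..<m} \<and> (\<forall>i<m. f i \<in> {..<N})}"
    using cbasis_span[OF assms] by (intro wedge_expand_mono) auto
  have c2: "{mono e (f ` {..<m}) | f. inj_on f {..<m} \<and> (\<forall>i<m. f i \<in> {..<N})}
     \<subseteq> {mono e S | S. S \<subseteq> {..<N} \<and> card S = m}"
  proof safe
    fix f assume "inj_on f {..<m}" "\<forall>i<m. f i \<in> {..<N}"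
    thus "\<exists>S. mono e (f ` {..<m}) = mono e S \<and> S \<subseteq> {..<N} \<and> card S = m"
      by (intro exI[of _ "f ` {..<m}"]) (auto simp: card_image)
  qed
  from subsetD[OF fs.span_mono[OF c2] c1]
  show "wedge m vs \<in> fs.span {mono e S | S. S \<subseteq> {..<N} \<and> card S = m}" .
qed

lemma lin_on_zero:
  assumes "lin_on X L" "0 \<in> X"
  shows "L 0 = 0"
proof -
  have "L (fscale 0 0) = fscale 0 (L 0)" using assms unfolding lin_on_def by blast
  moreover have "fscale 0 (0 :: 'a \<Rightarrow> complex) = 0" "fscale 0 (L 0) = 0"
    by (auto simp: fscale_def fun_eq_iff)
  ultimately show ?thesis by simp
qed

lemma lin_on_span:
  assumes L: "lin_on X L" and X: "fs.subspace X" and Y: "Y \<subseteq> X" and w: "w \<in> fs.span Y"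
  shows "L w \<in> fs.span (L ` Y)"
proof -
  have SX: "fs.span Y \<subseteq> X" using Y X by (rule fs.span_minimal)
  have "w \<in> fs.span Y \<longrightarrow> L w \<in> fs.span (L ` Y)"
    using w
  proof (induction rule: fs.span_induct_alt)
    case base
    show ?case by (simp only: lin_on_zero[OF L fs.subspace_0[OF X]] fs.span_zero simp_thms)
  next
    case (step c x y)
    show ?case
    proof
      assume "fscale c x + y \<in> fs.span Y"
      hence yY: "y \<in> fs.span Y"
        using step(1) by (metis fs.span_add_eq fs.span_base fs.span_scale)
      have xX: "x \<in> X" and yX: "y \<in> X" using step(1) Y yY SX by auto
      have cxX: "fscale c x \<in> X" by (rule fs.subspace_scale[OF X xX])
      have "L (fscale c x + y) = fscale c (L x) + L y"
        using L cxX yX xX unfolding lin_on_def by simp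
      moreover have "L y \<in> fs.span (L ` Y)" using step(2) yY by blast
      moreover have "L x \<in> fs.span (L ` Y)" using step(1) by (intro fs.span_base) auto
      ultimately show "L (fscale c x + y) \<in> fs.span (L ` Y)"
        by (simp add: fs.span_add fs.span_scale)
    qed
  qed
  thus ?thesis using w by blast
qed

lemma lin_on_ext_span:
  assumes L: "lin_on (ext m) L" and e: "cbasis N e" and w: "w \<in> ext m"
  shows "L w \<in> fs.span ((\<lambda>S. L (mono e S)) ` {S. S \<subseteq> {..<N} \<and> card S = m})"
proof -
  let ?Y = "{mono e S | S. S \<subseteq> {..<N} \<and> card S = m}"
  have "?Y \<subseteq> ext m" using mono_in_ext by blast
  hence "L w \<in> fs.span (L ` ?Y)"
    using lin_on_span[OF L ext_subspace _ subsetD[OF ext_spanned[OF e] w]] by blast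
  moreover have "L ` ?Y = (\<lambda>S. L (mono e S)) ` {S. S \<subseteq> {..<N} \<and> card S = m}" by blast
  ultimately show ?thesis by simp
qed

lemma lin_on_ext_zero:
  assumes L: "lin_on (ext m) L" and e: "cbasis N e"
    and z: "\<And>S. S \<subseteq> {..<N} \<Longrightarrow> card S = m \<Longrightarrow> L (mono e S) = 0"
    and w: "w \<in> ext m"
  shows "L w = 0"
proof -
  have "(\<lambda>S. L (mono e S)) ` {S. S \<subseteq> {..<N} \<and> card S = m} \<subseteq> {0}" using z by auto
  hence "fs.span ((\<lambda>S. L (mono e S)) ` {S. S \<subseteq> {..<N} \<and> card S = m}) \<subseteq> fs.span {0}"
    by (rule fs.span_mono)
  moreover have "fs.span {0 :: 'b list \<Rightarrow> complex} = {0}" using fs.span_insert_0[of "{}"] by simp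
  ultimately have "fs.span ((\<lambda>S. L (mono e S)) ` {S. S \<subseteq> {..<N} \<and> card S = m}) \<subseteq> {0}" by simp
  thus ?thesis using lin_on_ext_span[OF L e w] by blast
qed


lemma prod_indicator:
  fixes m :: nat
  shows "(\<Prod>i<m. (if P i then (1::complex) else 0)) = (if \<forall>i<m. P i then 1 else 0)"
proof (cases "\<forall>i<m. P i")
  case True thus ?thesis by simp
next
  case False
  then obtain i where "i < m" "\<not> P i" by blast
  thus ?thesis by (intro trans[OF prod_zero]) (auto intro!: bexI[of _ i])
qed

lemma delta_mono_eval:
  fixes \<nu> :: "nat \<Rightarrow> 'n"
  assumes \<nu>: "inj_on \<nu> {..<N}"
    and T: "T \<subseteq> {..<N}" "card T = m" and T': "T' \<subseteq> {..<N}" "card T' = m"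
  shows "mono (\<lambda>t x. if x = \<nu> t then 1 else 0) T (map \<nu> (sorted_list_of_set T')) = (if T = T' then 1 else 0)"
proof -
  define s where "s = sorted_list_of_set T"
  define s' where "s' = sorted_list_of_set T'"
  have fT: "finite T" "finite T'" using T T' finite_subset by blast+
  have ls: "length s = m" "distinct s" "set s = T" using fT T by (auto simp: s_def)
  have ls': "length s' = m" "distinct s'" "set s' = T'" using fT T' by (auto simp: s'_def)
  have sN: "s ! i < N" if "i < m" for i using ls T that nth_mem by fastforce
  have sN': "s' ! i < N" if "i < m" for i using ls' T' that nth_mem by fastforce
  let ?P = "{\<sigma>. \<sigma> permutes {..<m}}"
  have "mono (\<lambda>t x. if x = \<nu> t then 1 else 0) T (map \<nu> s') =
     (\<Sum>\<sigma>\<in>?P. of_int (sign \<sigma>) * (\<Prod>i<m. (if \<nu> (s' ! \<sigma> i) = \<nu> (s ! i) then 1 else 0)))"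
    unfolding mono_def s_def[symmetric] T(2)
  proof (subst wedge_apply)
    show "length (map \<nu> s') = m" by (simp add: ls')
    show "(\<Sum>\<sigma>\<in>?P. of_int (sign \<sigma>) * (\<Prod>i<m. (\<lambda>t x. if x = \<nu> t then 1 else 0) (s ! i) (map \<nu> s' ! \<sigma> i))) =
     (\<Sum>\<sigma>\<in>?P. of_int (sign \<sigma>) * (\<Prod>i<m. (if \<nu> (s' ! \<sigma> i) = \<nu> (s ! i) then 1 else 0)))"
    proof (intro sum.cong refl arg_cong2[where f = "(*)"] prod.cong)
      fix \<sigma> i assume "\<sigma> \<in> ?P" "i \<in> {..<m}"
      hence "\<sigma> i < m" using permutes_in_image by fastforce
      thus "(\<lambda>t x. if x = \<nu> t then 1 else 0) (s ! i) (map \<nu> s' ! \<sigma> i) = (if \<nu> (s' ! \<sigma> i) = \<nu> (s ! i) then 1 else 0)"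
        using ls' by simp
    qed
  qed
  also have "\<dots> = (\<Sum>\<sigma>\<in>?P. of_int (sign \<sigma>) * (if \<forall>i<m. s ! i = s' ! \<sigma> i then 1 else 0))"
  proof (rule sum.cong[OF refl])
    fix \<sigma> assume "\<sigma> \<in> ?P"
    hence sm: "\<sigma> i < m" if "i < m" for i using that permutes_in_image by fastforce
    have pe: "(\<Prod>i<m. (if \<nu> (s' ! \<sigma> i) = \<nu> (s ! i) then 1 else (0::complex))) =
          (\<Prod>i<m. (if s ! i = s' ! \<sigma> i then 1 else 0))"
    proof (rule prod.cong[OF refl])
      fix i assume "i \<in> {..<m}"
      hence "\<nu> (s' ! \<sigma> i) = \<nu> (s ! i) \<longleftrightarrow> s ! i = s' ! \<sigma> i"
        using \<nu> sN sN' sm by (auto simp: inj_on_def)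
      thus "(if \<nu> (s' ! \<sigma> i) = \<nu> (s ! i) then 1 else (0::complex)) = (if s ! i = s' ! \<sigma> i then 1 else 0)"
        by simp
    qed
    show "of_int (sign \<sigma>) * (\<Prod>i<m. (if \<nu> (s' ! \<sigma> i) = \<nu> (s ! i) then 1 else (0::complex))) =
       of_int (sign \<sigma>) * (if \<forall>i<m. s ! i = s' ! \<sigma> i then 1 else 0)"
      unfolding pe by (simp only: prod_indicator)
  qed
  also have "\<dots> = (if T = T' then 1 else 0)"
  proof (cases "T = T'")
    case True
    hence ss: "s' = s" by (simp add: s_def s'_def)
    have "(\<Sum>\<sigma>\<in>?P. of_int (sign \<sigma>) * (if \<forall>i<m. s ! i = s' ! \<sigma> i then 1 else (0::complex))) =
          (\<Sum>\<sigma>\<in>?P. (if \<sigma> = id then 1 else 0))"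
    proof (rule sum.cong[OF refl])
      fix \<sigma> assume "\<sigma> \<in> ?P"
      hence p: "\<sigma> permutes {..<m}" by simp
      hence sm: "\<sigma> i < m" if "i < m" for i using that permutes_in_image by fastforce
      have "(\<forall>i<m. s ! i = s ! \<sigma> i) \<longleftrightarrow> \<sigma> = id"
      proof
        assume h: "\<forall>i<m. s ! i = s ! \<sigma> i"
        show "\<sigma> = id"
        proof
          fix x show "\<sigma> x = id x"
          proof (cases "x < m")
            case True
            thus ?thesis using h sm[OF True] ls nth_eq_iff_index_eq by fastforce
          next
            case False thus ?thesis using p by (simp add: permutes_def)
          qed
        qed
      qed simp
      thus "of_int (sign \<sigma>) * (if \<forall>i<m. s ! i = s' ! \<sigma> i then 1 else (0::complex)) = (if \<sigma> = id then 1 else 0)"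
        by (auto simp: ss sign_id)
    qed
    also have "\<dots> = 1" by (simp add: permutes_id finite_permutations)
    finally show ?thesis using True by simp
  next
    case False
    have "\<not> (\<forall>i<m. s ! i = s' ! \<sigma> i)" if "\<sigma> \<in> ?P" for \<sigma>
    proof
      assume h: "\<forall>i<m. s ! i = s' ! \<sigma> i"
      have sm: "\<sigma> i < m" if "i < m" for i using that permutes_in_image \<open>\<sigma> \<in> ?P\<close> by fastforce
      have "T \<subseteq> T'"
      proof
        fix x assume "x \<in> T"
        then obtain i where "i < m" "x = s ! i" using ls by (metis in_set_conv_nth)
        thus "x \<in> T'" using h sm ls' nth_mem by metis
      qed
      hence "T = T'" using card_subset_eq[OF fT(2)] T T' by simp
      thus False using False by simp
    qed
    hence "(\<Sum>\<sigma>\<in>?P. of_int (sign \<sigma>) * (if \<forall>i<m. s ! i = s' ! \<sigma> i then 1 else (0::complex))) = 0"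
      by (intro sum.neutral) auto
    thus ?thesis using False by simp
  qed
  finally show ?thesis by (simp add: s'_def)
qed

lemma mono_nonzero:
  fixes e :: "nat \<Rightarrow> ('n::finite \<Rightarrow> complex)"
  assumes e: "cbasis CARD('n) e" and S: "S \<subseteq> {..<CARD('n)}"
  shows "mono e S \<noteq> 0"
proof
  assume S0: "mono e S = 0"
  define N where "N = CARD('n)"
  define m where "m = card S"
  obtain \<nu> :: "nat \<Rightarrow> 'n" where \<nu>: "bij_betw \<nu> {..<N} UNIV"
    using ex_bij_betw_nat_finite[of "UNIV :: 'n set"] by (auto simp: N_def atLeast0LessThan)
  have inu: "inj_on \<nu> {..<N}" using \<nu> by (simp add: bij_betw_def)
  define \<delta> :: "nat \<Rightarrow> 'n \<Rightarrow> complex" where "\<delta> = (\<lambda>t x. if x = \<nu> t then 1 else 0)"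
  define TT where "TT = {T. T \<subseteq> {..<N} \<and> card T = m}"
  have fTT: "finite TT" unfolding TT_def by (rule finite_subset[of _ "Pow {..<N}"]) auto
  have STT: "S \<in> TT" using S by (simp add: TT_def N_def m_def)
  have key: "mono \<delta> T (map \<nu> (sorted_list_of_set T')) = (if T = T' then 1 else 0)"
    if "T \<in> TT" "T' \<in> TT" for T T'
    using that unfolding \<delta>_def TT_def by (intro delta_mono_eval[OF inu]) auto
  have injD: "inj_on (mono \<delta>) TT"
  proof (rule inj_onI)
    fix T T' assume h: "T \<in> TT" "T' \<in> TT" "mono \<delta> T = mono \<delta> T'"
    have "mono \<delta> T (map \<nu> (sorted_list_of_set T')) = mono \<delta> T' (map \<nu> (sorted_list_of_set T'))"
      using h(3) by simp
    thus "T = T'" using key[OF h(1,2)] key[OF h(2,2)] by (auto split: if_splits)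
  qed
  have indep: "fs.independent (mono \<delta> ` TT)"
    unfolding fs.independent_explicit_module
  proof (intro allI impI)
    fix t u v
    assume t: "finite t" "t \<subseteq> mono \<delta> ` TT" "(\<Sum>v\<in>t. fscale (u v) v) = 0" "v \<in> t"
    then obtain T0 where T0: "T0 \<in> TT" "v = mono \<delta> T0" by blast
    let ?l = "map \<nu> (sorted_list_of_set T0)"
    have "0 = (\<Sum>w\<in>t. fscale (u w) w) ?l" using t(3) by simp
    also have "\<dots> = (\<Sum>w\<in>t. u w * w ?l)" by (simp add: sum_fun_apply fscale_def)
    also have "\<dots> = (\<Sum>w\<in>t. (if w = v then u w else 0))"
    proof (rule sum.cong[OF refl])
      fix w assume "w \<in> t"
      then obtain T where T: "T \<in> TT" "w = mono \<delta> T" using t(2) by blast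
      have "w = v \<longleftrightarrow> T = T0" using injD T T0 by (auto dest: inj_onD)
      thus "u w * w ?l = (if w = v then u w else 0)" using key[OF T(1) T0(1)] T by auto
    qed
    also have "\<dots> = u v" using t(1,4) by simp
    finally show "u v = 0" by simp
  qed
  have sub: "mono \<delta> ` TT \<subseteq> fs.span ((\<lambda>T. mono e T) ` (TT - {S}))"
  proof -
    have "mono \<delta> ` TT \<subseteq> ext m" using mono_in_ext unfolding TT_def by blast
    also have "\<dots> \<subseteq> fs.span {mono e T | T. T \<subseteq> {..<N} \<and> card T = m}"
      using ext_spanned[OF e] unfolding N_def by blast
    also have "{mono e T | T. T \<subseteq> {..<N} \<and> card T = m} \<subseteq> insert 0 ((\<lambda>T. mono e T) ` (TT - {S}))"
      using S0 unfolding TT_def by blast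
    hence "fs.span {mono e T | T. T \<subseteq> {..<N} \<and> card T = m} \<subseteq> fs.span (insert 0 ((\<lambda>T. mono e T) ` (TT - {S})))"
      by (rule fs.span_mono)
    finally show ?thesis by simp
  qed
  have "card (mono \<delta> ` TT) \<le> card ((\<lambda>T. mono e T) ` (TT - {S}))"
    using fs.independent_span_bound[OF _ indep sub] fTT by simp
  also have "\<dots> \<le> card (TT - {S})" by (rule card_image_le) (simp add: fTT)
  also have "\<dots> < card TT" using STT fTT by (intro card_Diff1_less)
  finally show False using card_image[OF injD] by simp
qed



definition fstp :: "('n + 'n \<Rightarrow> complex) \<Rightarrow> ('n \<Rightarrow> complex)" where
  "fstp x = (\<lambda>i. x (Inl i))"
definition sndp :: "('n + 'n \<Rightarrow> complex) \<Rightarrow> ('n \<Rightarrow> complex)" where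
  "sndp x = (\<lambda>i. x (Inr i))"

lemma fstp_dsum[simp]: "fstp (dsum v w) = v" by (simp add: fstp_def dsum_def)
lemma sndp_dsum[simp]: "sndp (dsum v w) = w" by (simp add: sndp_def dsum_def)
lemma dsum_eq_iff: "dsum v w = x \<longleftrightarrow> v = fstp x \<and> w = sndp x"
  by (auto simp: fstp_def sndp_def dsum_def fun_eq_iff split: sum.splits)
lemma dsum_inj[simp]: "dsum v w = dsum v' w' \<longleftrightarrow> v = v' \<and> w = w'"
  by (auto simp: dsum_eq_iff)

lemma fstp_sum: "fstp (\<Sum>i\<in>I. fscale (c i) (g i)) = (\<Sum>i\<in>I. fscale (c i) (fstp (g i)))"
  by (auto simp: fstp_def fun_eq_iff sum_fun_apply fscale_def)
lemma sndp_sum: "sndp (\<Sum>i\<in>I. fscale (c i) (g i)) = (\<Sum>i\<in>I. fscale (c i) (sndp (g i)))"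
  by (auto simp: sndp_def fun_eq_iff sum_fun_apply fscale_def)

lemma dsum_add: "dsum (v + v') (w + w') = dsum v w + dsum v' w'"
  by (auto simp: dsum_def fun_eq_iff split: sum.splits)
lemma dsum_scale: "dsum (fscale c v) (fscale c w) = fscale c (dsum v w)"
  by (auto simp: dsum_def fun_eq_iff fscale_def split: sum.splits)
lemma dsum_zero: "dsum 0 0 = 0"
  by (auto simp: dsum_def fun_eq_iff split: sum.splits)
lemma fscale_zero: "fscale c 0 = 0"
  by (auto simp: fscale_def fun_eq_iff)

lemma span_image_sum:
  assumes "finite I" "x \<in> fs.span (g ` I)"
  shows "\<exists>c. x = (\<Sum>i\<in>I. fscale (c i) (g i))"
  using assms(2)
proof (induction rule: fs.span_induct_alt)
  case base
  show ?case by (intro exI[of _ "\<lambda>_. 0"]) (simp add: fscale_def fun_eq_iff sum_fun_apply)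
next
  case (step c x y)
  then obtain j where j: "j \<in> I" "x = g j" by blast
  from step obtain d where d: "y = (\<Sum>i\<in>I. fscale (d i) (g i))" by blast
  have "fscale c x + y = (\<Sum>i\<in>I. fscale ((d(j := d j + c)) i) (g i))"
  proof -
    have "(\<Sum>i\<in>I. fscale ((d(j := d j + c)) i) (g i)) = (\<Sum>i\<in>I. fscale (d i) (g i) + (if i = j then fscale c (g i) else 0))"
      by (rule sum.cong) (auto simp: fscale_def fun_eq_iff algebra_simps)
    also have "\<dots> = y + fscale c x" using assms(1) j by (simp add: sum.distrib d)
    finally show ?thesis by (simp add: add.commute)
  qed
  thus ?case by blast
qed

lemma sum_in_span:
  assumes "\<And>i. i \<in> I \<Longrightarrow> i \<notin> J \<Longrightarrow> fscale (d i) (h i) = 0"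
  shows "(\<Sum>i\<in>I. fscale (d i) (h i)) \<in> fs.span (h ` J)"
proof (rule fs.span_sum)
  fix i assume "i \<in> I"
  show "fscale (d i) (h i) \<in> fs.span (h ` J)"
  proof (cases "i \<in> J")
    case True
    hence "h i \<in> fs.span (h ` J)" by (intro fs.span_base) auto
    thus ?thesis by (rule fs.span_scale)
  next
    case False
    have z: "fscale (d i) (h i) = 0" by (rule assms[OF \<open>i \<in> I\<close> False])
    show ?thesis unfolding z by (rule fs.span_zero)
  qed
qed

lemma basis_coeff_zero:
  assumes "cbasis N E" "(\<Sum>i<N. fscale (d i) (E i)) = 0" "i < N"
  shows "d i = 0"
proof -
  have inj: "inj_on E {..<N}" and ind: "fs.independent (E ` {..<N})"
    using assms(1) by (auto simp: cbasis_def cindep_eq)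
  define u where "u v = d (the_inv_into {..<N} E v)" for v
  have "(\<Sum>v\<in>E ` {..<N}. fscale (u v) v) = (\<Sum>i<N. fscale (u (E i)) (E i))"
    by (rule sum.reindex[OF inj, unfolded comp_def])
  also have "\<dots> = (\<Sum>i<N. fscale (d i) (E i))"
    by (rule sum.cong) (auto simp: u_def the_inv_into_f_f[OF inj])
  finally have "(\<Sum>v\<in>E ` {..<N}. fscale (u v) v) = 0" using assms(2) by simp
  hence "u (E i) = 0" using ind assms(3) unfolding fs.independent_explicit_module by blast
  thus ?thesis by (simp add: u_def the_inv_into_f_f[OF inj] assms(3))
qed

definition gen :: "(nat \<Rightarrow> ('n \<Rightarrow> complex)) \<Rightarrow> (nat \<Rightarrow> ('n \<Rightarrow> complex)) \<Rightarrow> nat \<Rightarrow> nat \<Rightarrow> nat \<Rightarrow> ('n + 'n \<Rightarrow> complex)" where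
  "gen e E a b i = (if i < a then dsum 0 (E i) else if i < a + b then dsum (e i) (E i) else dsum (e i) 0)"

definition rep :: "('n::finite + 'n \<Rightarrow> complex) set \<Rightarrow> (nat \<Rightarrow> ('n \<Rightarrow> complex)) \<Rightarrow> (nat \<Rightarrow> ('n \<Rightarrow> complex)) \<Rightarrow> nat \<Rightarrow> nat \<Rightarrow> bool" where
  "rep P e E a b \<longleftrightarrow> a + b \<le> CARD('n) \<and> cbasis CARD('n) e \<and> cbasis CARD('n) E \<and>
     P = fs.span (gen e E a b ` {..<CARD('n)})"

lemma rep_intro:
  assumes "a + b \<le> CARD('n)" "cbasis CARD('n) e" "cbasis CARD('n) E"
    "P = cspan ({dsum 0 (E i) | i. i < a} \<union> {dsum (e i) (E i) | i. a \<le> i \<and> i < a + b}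
                \<union> {dsum (e i) 0 | i. a + b \<le> i \<and> i < CARD('n)})"
  shows "rep (P :: ('n::finite + 'n \<Rightarrow> complex) set) e E a b"
proof -
  have "({dsum 0 (E i) | i. i < a} \<union> {dsum (e i) (E i) | i. a \<le> i \<and> i < a + b}
                \<union> {dsum (e i) 0 | i. a + b \<le> i \<and> i < CARD('n)}) = gen e E a b ` {..<CARD('n)}"
    using assms(1) unfolding gen_def by (auto simp: image_iff)
  thus ?thesis using assms by (simp add: rep_def cspan_eq)
qed

lemma fstp_gen: "fstp (gen e E a b i) = (if i < a then 0 else e i)"
  by (simp add: gen_def)
lemma sndp_gen: "sndp (gen e E a b i) = (if i < a + b then E i else 0)"
  by (simp add: gen_def)

context
  fixes P :: "('n::finite + 'n \<Rightarrow> complex) set" and e E a b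
  assumes R: "rep P e E a b"
begin

lemma rep_N: "a + b \<le> CARD('n)" using R by (simp add: rep_def)
lemma rep_e: "cbasis CARD('n) e" using R by (simp add: rep_def)
lemma rep_E: "cbasis CARD('n) E" using R by (simp add: rep_def)

lemma rep_mem:
  assumes "x \<in> P"
  shows "\<exists>c. fstp x = (\<Sum>i<CARD('n). fscale (if i < a then 0 else c i) (e i)) \<and>
             sndp x = (\<Sum>i<CARD('n). fscale (if i < a + b then c i else 0) (E i))"
proof -
  obtain c where c: "x = (\<Sum>i<CARD('n). fscale (c i) (gen e E a b i))"
    using span_image_sum[of "{..<CARD('n)}" x] assms R by (auto simp: rep_def)
  have "fstp x = (\<Sum>i<CARD('n). fscale (if i < a then 0 else c i) (e i))"
    unfolding c fstp_sum fstp_gen by (rule sum.cong) (auto simp: fscale_def fun_eq_iff)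
  moreover have "sndp x = (\<Sum>i<CARD('n). fscale (if i < a + b then c i else 0) (E i))"
    unfolding c sndp_sum sndp_gen by (rule sum.cong) (auto simp: fscale_def fun_eq_iff)
  ultimately show ?thesis by blast
qed

lemma rep_gen_in: "i < CARD('n) \<Longrightarrow> gen e E a b i \<in> P"
  using R by (auto simp: rep_def intro!: fs.span_base)

lemma rep_subspace: "fs.subspace P"
  using R by (simp add: rep_def)

lemma rep_K2: "a + b \<le> i \<Longrightarrow> i < CARD('n) \<Longrightarrow> e i \<in> Ker P"
  using rep_gen_in[of i] by (simp add: Ker_def gen_def)

lemma rep_D2: "a \<le> i \<Longrightarrow> i < CARD('n) \<Longrightarrow> e i \<in> Dom P"
  using rep_gen_in[of i] unfolding Dom_def gen_def by (auto split: if_splits)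

lemma rep_I2: "i < a + b \<Longrightarrow> E i \<in> Im P"
  using rep_gen_in[of i] rep_N unfolding Im_def gen_def by (auto split: if_splits)

lemma rep_F2: "i < a \<Longrightarrow> E i \<in> Indef P"
  using rep_gen_in[of i] rep_N unfolding Indef_def gen_def by (auto split: if_splits)

lemma rep_D1: "v \<in> Dom P \<Longrightarrow> v \<in> fs.span (e ` {a..<CARD('n)})"
proof -
  assume "v \<in> Dom P"
  then obtain w where "dsum v w \<in> P" by (auto simp: Dom_def)
  from rep_mem[OF this] obtain c where
    vc: "v = (\<Sum>i<CARD('n). fscale (if i < a then 0 else c i) (e i))" by auto
  show ?thesis unfolding vc by (intro sum_in_span) (auto simp: fscale_def fun_eq_iff)
qed

lemma rep_I1: "w \<in> Im P \<Longrightarrow> w \<in> fs.span (E ` {..<a + b})"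
proof -
  assume "w \<in> Im P"
  then obtain v where "dsum v w \<in> P" by (auto simp: Im_def)
  from rep_mem[OF this] obtain c where
    wc: "w = (\<Sum>i<CARD('n). fscale (if i < a + b then c i else 0) (E i))" by auto
  show ?thesis unfolding wc by (intro sum_in_span) (auto simp: fscale_def fun_eq_iff)
qed

lemma rep_K1: "v \<in> Ker P \<Longrightarrow> v \<in> fs.span (e ` {a + b..<CARD('n)})"
proof -
  assume "v \<in> Ker P"
  hence "dsum v 0 \<in> P" by (auto simp: Ker_def)
  from rep_mem[OF this] obtain c where
    c1: "v = (\<Sum>i<CARD('n). fscale (if i < a then 0 else c i) (e i))" and
    c2: "0 = (\<Sum>i<CARD('n). fscale (if i < a + b then c i else 0) (E i))" by auto
  have z: "c i = 0" if "i < a + b" for i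
    using basis_coeff_zero[OF rep_E c2[symmetric], of i] that rep_N by simp
  show ?thesis unfolding c1 using z by (intro sum_in_span) (auto simp: fscale_def fun_eq_iff)
qed

lemma rep_F1: "w \<in> Indef P \<Longrightarrow> w \<in> fs.span (E ` {..<a})"
proof -
  assume "w \<in> Indef P"
  hence "dsum 0 w \<in> P" by (auto simp: Indef_def)
  from rep_mem[OF this] obtain c where
    c1: "0 = (\<Sum>i<CARD('n). fscale (if i < a then 0 else c i) (e i))" and
    c2: "w = (\<Sum>i<CARD('n). fscale (if i < a + b then c i else 0) (E i))" by auto
  have z: "c i = 0" if "a \<le> i" "i < CARD('n)" for i
    using basis_coeff_zero[OF rep_e c1[symmetric], of i] that by simp
  show ?thesis unfolding c2 using z by (intro sum_in_span) (auto simp: fscale_def fun_eq_iff)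
qed

lemma rep_Ker_subspace: "fs.subspace (Ker P)"
  unfolding fs.subspace_def Ker_def
proof (intro conjI ballI allI)
  show "0 \<in> {v. dsum v 0 \<in> P}" using fs.subspace_0[OF rep_subspace] by (simp add: dsum_zero)
  fix x y assume "x \<in> {v. dsum v 0 \<in> P}" "y \<in> {v. dsum v 0 \<in> P}"
  thus "x + y \<in> {v. dsum v 0 \<in> P}"
    using fs.subspace_add[OF rep_subspace] dsum_add[of x y 0 0] by simp
next
  fix c x assume "x \<in> {v. dsum v 0 \<in> P}"
  thus "fscale c x \<in> {v. dsum v 0 \<in> P}"
    using fs.subspace_scale[OF rep_subspace] dsum_scale[of c x 0] by (simp add: fscale_zero)
qed

lemma rep_b0: "b = 0 \<Longrightarrow> Dom P \<subseteq> Ker P"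
proof
  fix v assume b: "b = 0" and v: "v \<in> Dom P"
  have "v \<in> fs.span (e ` {a + b..<CARD('n)})" using rep_D1[OF v] b by simp
  moreover have "fs.span (e ` {a + b..<CARD('n)}) \<subseteq> Ker P"
    by (rule fs.span_minimal[OF _ rep_Ker_subspace]) (auto intro: rep_K2)
  ultimately show "v \<in> Ker P" by blast
qed

end



lemma lam_nonzero_iff:
  fixes e E :: "nat \<Rightarrow> ('n::finite \<Rightarrow> complex)"
  assumes e: "cbasis CARD('n) e" and E: "cbasis CARD('n) E" and L: "lin_on (ext m) L"
    and m: "m \<le> CARD('n)"
    and HL: "\<forall>S. S \<subseteq> {..<CARD('n)} \<and> card S = m \<longrightarrow>
        L (mono e S) = (if {..<a} \<subseteq> S \<and> S \<subseteq> {..<a + b} then mono E S else 0)"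
  shows "op_nonzero m L \<longleftrightarrow> a \<le> m \<and> m \<le> a + b"
proof
  assume nz: "op_nonzero m L"
  show "a \<le> m \<and> m \<le> a + b"
  proof (rule ccontr)
    assume nab: "\<not> (a \<le> m \<and> m \<le> a + b)"
    have "L w = 0" if "w \<in> ext m" for w
    proof (rule lin_on_ext_zero[OF L e _ that])
      fix S assume S: "S \<subseteq> {..<CARD('n)}" "card S = m"
      have nh: "\<not> ({..<a} \<subseteq> S \<and> S \<subseteq> {..<a + b})"
      proof
        assume h: "{..<a} \<subseteq> S \<and> S \<subseteq> {..<a + b}"
        have "a \<le> m" using card_mono[OF _ conjunct1[OF h]] S finite_subset by fastforce
        moreover have "m \<le> a + b" using card_mono[OF _ conjunct2[OF h]] S by simp
        ultimately show False using nab by simp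
      qed
      from HL S have "L (mono e S) = (if {..<a} \<subseteq> S \<and> S \<subseteq> {..<a + b} then mono E S else 0)" by blast
      thus "L (mono e S) = 0" by (simp only: nh if_False)
    qed
    thus False using nz by (auto simp: op_nonzero_def)
  qed
next
  assume ab: "a \<le> m \<and> m \<le> a + b"
  have "L (mono e {..<m}) = mono E {..<m}" using HL ab m by auto
  moreover have "mono E {..<m} \<noteq> 0" using mono_nonzero[OF E] m by simp
  moreover have "mono e {..<m} \<in> ext m" by (rule mono_in_ext) simp
  ultimately show "op_nonzero m L" by (auto simp: op_nonzero_def)
qed

lemma span_single_dim: "\<omega> \<noteq> 0 \<Longrightarrow> fs.dim (fs.span {\<omega>}) = 1"
proof -
  assume "\<omega> \<noteq> 0"
  hence "fs.independent {\<omega>}" by (simp add: fs.independent_insert)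
  thus ?thesis by (simp add: fs.dim_eq_card_independent)
qed

lemma rank_one:
  fixes e :: "nat \<Rightarrow> ('n::finite \<Rightarrow> complex)"
  assumes e: "cbasis CARD('n) e" and L: "lin_on (ext m) L"
    and S0: "S0 \<subseteq> {..<CARD('n)}" "card S0 = m" and \<omega>: "\<omega> \<noteq> 0"
    and HL: "\<And>S. S \<subseteq> {..<CARD('n)} \<Longrightarrow> card S = m \<Longrightarrow> L (mono e S) = (if S = S0 then \<omega> else 0)"
  shows "op_rank m L = 1"
proof -
  have Leq: "L ` ext m = fs.span {\<omega>}"
  proof
    show "L ` ext m \<subseteq> fs.span {\<omega>}"
    proof
      fix x assume "x \<in> L ` ext m"
      then obtain w where w: "w \<in> ext m" "x = L w" by blast
      have "(\<lambda>S. L (mono e S)) ` {S. S \<subseteq> {..<CARD('n)} \<and> card S = m} \<subseteq> fs.span {\<omega>}"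
        using HL by (auto intro: fs.span_base fs.span_zero)
      hence "fs.span ((\<lambda>S. L (mono e S)) ` {S. S \<subseteq> {..<CARD('n)} \<and> card S = m}) \<subseteq> fs.span {\<omega>}"
        by (rule span_subset_span)
      thus "x \<in> fs.span {\<omega>}" using lin_on_ext_span[OF L e w(1)] w(2) by blast
    qed
  next
    show "fs.span {\<omega>} \<subseteq> L ` ext m"
    proof
      fix x assume "x \<in> fs.span {\<omega>}"
      then obtain k where x: "x = fscale k \<omega>" by (auto simp: fs.span_singleton)
      have me: "mono e S0 \<in> ext m" using S0 by (intro mono_in_ext) simp
      have "L (fscale k (mono e S0)) = fscale k (L (mono e S0))" using L me by (simp add: lin_on_def)
      also have "L (mono e S0) = \<omega>" using HL S0 by simp
      finally have "x = L (fscale k (mono e S0))" using x by simp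
      moreover have "fscale k (mono e S0) \<in> ext m" by (rule fs.subspace_scale[OF ext_subspace me])
      ultimately show "x \<in> L ` ext m" by blast
    qed
  qed
  show ?thesis unfolding op_rank_def cdim_eq Leq by (rule span_single_dim[OF \<omega>])
qed

lemma card_eq_lessThan: "S \<subseteq> {..<m} \<Longrightarrow> card S = m \<Longrightarrow> S = {..<m}"
  by (simp add: card_subset_eq)

lemma lessThan_card_eq: "{..<m} \<subseteq> S \<Longrightarrow> finite S \<Longrightarrow> card S = m \<Longrightarrow> S = {..<m}"
  by (metis card_lessThan card_subset_eq)

lemma propto_lemma:
  fixes e E e' E' :: "nat \<Rightarrow> ('n::finite \<Rightarrow> complex)"
  assumes e: "cbasis CARD('n) e" and E: "cbasis CARD('n) E"
    and e': "cbasis CARD('n) e'" and E': "cbasis CARD('n) E'"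
    and m: "m \<le> CARD('n)"
    and L: "lin_on (ext m) L" and L': "lin_on (ext m) L'"
    and HL: "\<And>S. S \<subseteq> {..<CARD('n)} \<Longrightarrow> card S = m \<Longrightarrow> L (mono e S) = (if S = {..<m} then mono E {..<m} else 0)"
    and HL': "\<And>S. S \<subseteq> {..<CARD('n)} \<Longrightarrow> card S = m \<Longrightarrow> L' (mono e' S) = (if S = {..<m} then mono E' {..<m} else 0)"
    and He': "\<And>i. m \<le> i \<Longrightarrow> i < CARD('n) \<Longrightarrow> e' i \<in> fs.span (e ` {m..<CARD('n)})"
    and HE': "\<And>i. i < m \<Longrightarrow> E' i \<in> fs.span (E ` {..<m})"
  shows "op_propto m L L'"
proof -
  define N where "N = CARD('n)"
  define \<omega> where "\<omega> = mono E {..<m}"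
  define \<omega>' where "\<omega>' = mono E' {..<m}"
  have \<omega>0: "\<omega> \<noteq> 0" unfolding \<omega>_def using mono_nonzero[OF E] m by simp
  have \<omega>'0: "\<omega>' \<noteq> 0" unfolding \<omega>'_def using mono_nonzero[OF E'] m by simp
  have monoM: "mono f {..<m} = wedge m f" for f :: "nat \<Rightarrow> 'n \<Rightarrow> complex"
    unfolding mono_def card_lessThan by (rule wedge_cong) (simp add: lessThan_atLeast0)
  obtain d where d: "\<omega>' = fscale d \<omega>"
  proof -
    have "wedge m E' \<in> fs.span {mono E (f ` {..<m}) | f. inj_on f {..<m} \<and> (\<forall>i<m. f i \<in> {..<m})}"
      using HE' by (intro wedge_expand_mono) auto
    moreover have "{mono E (f ` {..<m}) | f. inj_on f {..<m} \<and> (\<forall>i<m. f i \<in> {..<m})} \<subseteq> {\<omega>}"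
    proof safe
      fix f assume "inj_on f {..<m}" "\<forall>i<m. f i \<in> {..<m}"
      hence "f ` {..<m} = {..<m}" by (intro card_eq_lessThan) (auto simp: card_image)
      thus "mono E (f ` {..<m}) = \<omega>" by (simp add: \<omega>_def)
    qed
    ultimately have "\<omega>' \<in> fs.span {\<omega>}" unfolding \<omega>'_def monoM using fs.span_mono by blast
    thus ?thesis using that by (auto simp: fs.span_singleton)
  qed
  have d0: "d \<noteq> 0" using d \<omega>'0 by (auto simp: fscale_def fun_eq_iff)
  have Lz: "L (mono e' S) = 0" if S: "S \<subseteq> {..<N}" "card S = m" "S \<noteq> {..<m}" for S
  proof -
    have fS: "finite S" using S finite_subset by blast
    obtain s where s: "s \<in> S" "m \<le> s" using S card_eq_lessThan by (metis not_le subsetI lessThan_iff)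
    define l where "l = sorted_list_of_set S"
    have ll: "length l = m" "set l = S" using fS S by (auto simp: l_def)
    obtain i0 where i0: "i0 < m" "l ! i0 = s" using s ll by (metis in_set_conv_nth)
    define A where "A i = (if i = i0 then {m..<N} else {..<N})" for i
    have "\<forall>i<m. e' (l ! i) \<in> fs.span (e ` A i)"
    proof (intro allI impI)
      fix i assume "i < m"
      hence lN: "l ! i < N" using ll S nth_mem by fastforce
      show "e' (l ! i) \<in> fs.span (e ` A i)"
      proof (cases "i = i0")
        case True thus ?thesis using He'[of "l ! i"] i0 s lN by (simp add: A_def N_def)
      next
        case False thus ?thesis using cbasis_span[OF e] by (simp add: A_def N_def)
      qed
    qed
    hence "wedge m (\<lambda>i. e' (l ! i)) \<in> fs.span {mono e (f ` {..<m}) | f. inj_on f {..<m} \<and> (\<forall>i<m. f i \<in> A i)}"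
      by (rule wedge_expand_mono)
    hence w: "mono e' S \<in> fs.span {mono e (f ` {..<m}) | f. inj_on f {..<m} \<and> (\<forall>i<m. f i \<in> A i)}"
      by (simp add: mono_def l_def S(2))
    have sub: "{mono e (f ` {..<m}) | f. inj_on f {..<m} \<and> (\<forall>i<m. f i \<in> A i)} \<subseteq> ext m" 
      by (auto intro!: mono_in_ext simp: card_image)
    have "L (mono e' S) \<in> fs.span (L ` {mono e (f ` {..<m}) | f. inj_on f {..<m} \<and> (\<forall>i<m. f i \<in> A i)})"
      by (rule lin_on_span[OF L ext_subspace sub w])
    moreover have "L ` {mono e (f ` {..<m}) | f. inj_on f {..<m} \<and> (\<forall>i<m. f i \<in> A i)} \<subseteq> {0}"
    proof safe
      fix f assume f: "inj_on f {..<m}" "\<forall>i<m. f i \<in> A i"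
      have "f i0 \<in> f ` {..<m}" "m \<le> f i0" using f i0 by (auto simp: A_def)
      hence ne: "f ` {..<m} \<noteq> {..<m}" by (metis lessThan_iff leD)
      have "f ` {..<m} \<subseteq> {..<N}"
      proof
        fix y assume "y \<in> f ` {..<m}"
        then obtain x where "x < m" "y = f x" by blast
        thus "y \<in> {..<N}" using f(2) by (cases "x = i0") (auto simp: A_def)
      qed
      thus "L (mono e (f ` {..<m})) = 0" using HL[of "f ` {..<m}"] f ne by (simp add: card_image N_def)
    qed
    hence "fs.span (L ` {mono e (f ` {..<m}) | f. inj_on f {..<m} \<and> (\<forall>i<m. f i \<in> A i)}) \<subseteq> fs.span {0}"
      by (rule fs.span_mono)
    ultimately show ?thesis using fs.span_insert_0[of "{}"] by auto
  qed
  obtain c where c: "L (mono e' {..<m}) = fscale c \<omega>"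
  proof -
    have me: "mono e' {..<m} \<in> ext m" by (rule mono_in_ext) simp
    have "(\<lambda>S. L (mono e S)) ` {S. S \<subseteq> {..<CARD('n)} \<and> card S = m} \<subseteq> fs.span {\<omega>}"
      using HL by (auto intro: fs.span_base fs.span_zero simp: \<omega>_def)
    hence "fs.span ((\<lambda>S. L (mono e S)) ` {S. S \<subseteq> {..<CARD('n)} \<and> card S = m}) \<subseteq> fs.span {\<omega>}"
      by (rule span_subset_span)
    hence "L (mono e' {..<m}) \<in> fs.span {\<omega>}" using lin_on_ext_span[OF L e me] by blast
    thus ?thesis using that by (auto simp: fs.span_singleton)
  qed
  have c0: "c \<noteq> 0"
  proof
    assume c00: "c = 0"
    have Lz': "L (mono e' S) = 0" if S: "S \<subseteq> {..<CARD('n)}" "card S = m" for S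
    proof (cases "S = {..<m}")
      case True
      have "L (mono e' S) = fscale c \<omega>" using c True by simp
      also have "\<dots> = 0" using c00 by (simp add: fscale_def fun_eq_iff)
      finally show ?thesis .
    next
      case False
      show ?thesis by (rule Lz) (use S False in \<open>auto simp: N_def\<close>)
    qed
    have me: "mono e {..<m} \<in> ext m" by (rule mono_in_ext) simp
    have "L (mono e {..<m}) = 0" by (rule lin_on_ext_zero[OF L e' Lz' me])
    moreover have "L (mono e {..<m}) = \<omega>" using HL[of "{..<m}"] m by (simp add: \<omega>_def)
    ultimately show False using \<omega>0 by simp
  qed
  define M where "M w = L w - fscale (c / d) (L' w)" for w
  have M: "lin_on (ext m) M"
    unfolding lin_on_def
  proof (intro conjI ballI allI)
    fix x y :: "'n list \<Rightarrow> complex" assume xy: "x \<in> ext m" "y \<in> ext m"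
    have "L (x + y) = L x + L y" "L' (x + y) = L' x + L' y"
      using L L' xy unfolding lin_on_def by blast+
    thus "M (x + y) = M x + M y" unfolding M_def by (simp add: fscale_def fun_eq_iff algebra_simps)
  next
    fix k and x :: "'n list \<Rightarrow> complex" assume x: "x \<in> ext m"
    have "L (fscale k x) = fscale k (L x)" "L' (fscale k x) = fscale k (L' x)"
      using L L' x unfolding lin_on_def by blast+
    thus "M (fscale k x) = fscale k (M x)" unfolding M_def by (simp add: fscale_def fun_eq_iff algebra_simps)
  qed
  have Mz: "M w = 0" if "w \<in> ext m" for w
  proof (rule lin_on_ext_zero[OF M e' _ that])
    fix S assume S: "S \<subseteq> {..<CARD('n)}" "card S = m"
    show "M (mono e' S) = 0"
    proof (cases "S = {..<m}")
      case True
      have "L (mono e' S) = fscale c \<omega>" using c True by simp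
      moreover have "L' (mono e' S) = fscale d \<omega>" using HL'[OF S] True d by (simp add: \<omega>'_def)
      ultimately show ?thesis using d0 by (simp add: M_def fscale_def fun_eq_iff)
    next
      case False
      have "L (mono e' S) = 0" by (rule Lz) (use S False in \<open>auto simp: N_def\<close>)
      moreover have "L' (mono e' S) = 0" using HL'[OF S] False by simp
      ultimately show ?thesis by (simp add: M_def fscale_zero)
    qed
  qed
  have "\<forall>w\<in>ext m. L w = fscale (c / d) (L' w)"
  proof
    fix w :: "'n list \<Rightarrow> complex" assume "w \<in> ext m"
    hence "L w - fscale (c / d) (L' w) = 0" using Mz by (simp add: M_def)
    thus "L w = fscale (c / d) (L' w)" by simp
  qed
  moreover have "c / d \<noteq> 0" using c0 d0 by simp
  ultimately show ?thesis unfolding op_propto_def by blast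
qed



lemma lambda_m_rep:
  assumes "lambda_m m P L"
  shows "\<exists>e E a b. rep (P :: ('n::finite + 'n \<Rightarrow> complex) set) e E a b \<and> lin_on (ext m) L \<and>
     (\<forall>S. S \<subseteq> {..<CARD('n)} \<and> card S = m \<longrightarrow>
        L (mono e S) = (if {..<a} \<subseteq> S \<and> S \<subseteq> {..<a + b} then mono E S else 0))"
  using assms unfolding lambda_m_def by (blast intro: rep_intro)

lemma basis_not_in_span:
  assumes e: "cbasis N e" and i: "i < N" "i \<notin> J" and J: "J \<subseteq> {..<N}"
  shows "e i \<notin> fs.span (e ` J)"
proof
  assume h: "e i \<in> fs.span (e ` J)"
  have inj: "inj_on e {..<N}" using e by (simp add: cbasis_def)
  have "e ` J \<subseteq> e ` {..<N} - {e i}" using J i inj by (auto simp: inj_on_def)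
  hence "e i \<in> fs.span (e ` {..<N} - {e i})" using h fs.span_mono by blast
  hence "fs.dependent (e ` {..<N})" unfolding fs.dependent_def using i by blast
  thus False using cbasis_indep[OF e] by simp
qed

lemma span_count:
  assumes E: "cbasis N E" and E': "cbasis N E'" and A: "A \<le> N" "A' \<le> N"
    and sub: "E' ` {..<A'} \<subseteq> fs.span (E ` {..<A})"
  shows "A' \<le> A"
proof -
  have ind: "fs.independent (E' ` {..<A'})"
    by (rule fs.independent_mono[OF cbasis_indep[OF E']]) (use A in auto)
  have "card (E' ` {..<A'}) \<le> card (E ` {..<A})"
    using fs.independent_span_bound[OF _ ind sub] by simp
  moreover have "card (E' ` {..<A'}) = A'"
    using cbasis_inj[OF E'] A by (subst card_image) (auto intro: inj_on_subset)
  moreover have "card (E ` {..<A}) = A"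
    using cbasis_inj[OF E] A by (subst card_image) (auto intro: inj_on_subset)
  ultimately show ?thesis by simp
qed

lemma Indef_KerIm:
  assumes "0 \<in> Ker P" shows "Indef (KerIm P) = Im P"
  using assms by (auto simp: Indef_def KerIm_def)

lemma Dom_KerIm:
  assumes "0 \<in> Im P" shows "Dom (KerIm P) = Ker P"
  using assms by (auto simp: Dom_def KerIm_def)

lemma comb_mono:
  fixes c b :: "nat \<Rightarrow> nat"
  assumes step: "\<forall>j. 1 \<le> j \<and> j + 1 \<le> k \<longrightarrow> c (j + 1) = c j + b j"
    and pos: "\<forall>j\<in>{1..k}. b j > 0"
  shows "1 \<le> j \<Longrightarrow> j < j' \<Longrightarrow> j' \<le> k \<Longrightarrow> c j + b j \<le> c j' \<and> (j + 1 < j' \<longrightarrow> c j + b j < c j')"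
proof (induction j' rule: less_induct)
  case (less j')
  show ?case
  proof (cases "j' = j + 1")
    case True thus ?thesis using step less.prems by auto
  next
    case False
    hence "j < j' - 1" using less.prems by simp
    hence IH: "c j + b j \<le> c (j' - 1)" using less.IH[of "j' - 1"] less.prems by simp
    have "c j' = c (j' - 1) + b (j' - 1)" using step[rule_format, of "j' - 1"] less.prems \<open>j < j' - 1\<close> by simp
    moreover have "b (j' - 1) > 0" using pos less.prems \<open>j < j' - 1\<close> by simp
    ultimately show ?thesis using IH by simp
  qed
qed

lemma comb_exists:
  fixes c b :: "nat \<Rightarrow> nat"
  assumes k: "k \<ge> 1" and c1: "c 1 = 0"
    and step: "\<forall>j. 1 \<le> j \<and> j + 1 \<le> k \<longrightarrow> c (j + 1) = c j + b j"
    and ck: "c k + b k = N" and m: "m \<le> N"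
  shows "\<exists>j\<in>{1..k}. c j \<le> m \<and> m \<le> c j + b j"
proof -
  define J where "J = {j\<in>{1..k}. c j \<le> m}"
  have "1 \<in> J" using k c1 by (simp add: J_def)
  have fJ: "finite J" by (simp add: J_def)
  define j where "j = Max J"
  have jJ: "j \<in> J" using fJ \<open>1 \<in> J\<close> by (auto simp: j_def intro: Max_in)
  show ?thesis
  proof (cases "j = k")
    case True thus ?thesis using jJ ck m by (auto simp: J_def)
  next
    case False
    hence "j + 1 \<le> k" "1 \<le> j" using jJ by (auto simp: J_def)
    hence "j + 1 \<notin> J \<or> j + 1 \<le> j" using Max_ge[OF fJ] j_def by (metis)
    hence "\<not> c (j + 1) \<le> m" using \<open>j + 1 \<le> k\<close> by (auto simp: J_def)
    hence "m < c j + b j" using step \<open>j + 1 \<le> k\<close> \<open>1 \<le> j\<close> by auto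
    thus ?thesis using jJ by (auto simp: J_def)
  qed
qed



theorem theorem2p4:
  fixes Ps :: "nat \<Rightarrow> ('n::finite + 'n \<Rightarrow> complex) set"
    and k m :: nat
    and L :: "nat \<Rightarrow> ('n list \<Rightarrow> complex) \<Rightarrow> ('n list \<Rightarrow> complex)"
  assumes "hinge Ps k"
    and "m \<le> CARD('n)"
    and "\<forall>j\<in>{1..k}. lambda_m m (Ps j) (L j)"
  shows "let A = (\<exists>!j. j \<in> {1..k} \<and> op_nonzero m (L j));
             B = (\<exists>j. 1 \<le> j \<and> j + 1 \<le> k \<and> op_nonzero m (L j) \<and> op_nonzero m (L (j + 1)) \<and>
                    (\<forall>t\<in>{1..k} - {j, j + 1}. \<not> op_nonzero m (L t)) \<and>
                    op_rank m (L j) = 1 \<and> op_rank m (L (j + 1)) = 1 \<and>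
                    op_propto m (L j) (L (j + 1)) \<and>
                    (\<forall>LQ. lambda_m m (KerIm (Ps j)) LQ \<longrightarrow> op_propto m (L j) LQ))
         in (A \<and> \<not> B) \<or> (\<not> A \<and> B)"
proof -
  note hinge = assms(1)[unfolded hinge_def]
  have k1: "k \<ge> 1" using hinge by blast
  have hj: "\<And>j. j \<in> {1..k} \<Longrightarrow> rk (Ps j) > 0" using hinge by blast
  have hch: "\<And>j. 1 \<le> j \<Longrightarrow> j + 1 \<le> k \<Longrightarrow> Ker (Ps j) = Dom (Ps (j + 1)) \<and> Im (Ps j) = Indef (Ps (j + 1))"
    using hinge by blast
  have hD1: "Dom (Ps 1) = UNIV" and hIk: "Im (Ps k) = UNIV" using hinge by blast+
  have m: "m \<le> CARD('n)" by (rule assms(2))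
  define H where "H j e E a b \<longleftrightarrow> rep (Ps j) e E a b \<and> lin_on (ext m) (L j) \<and>
     (\<forall>S. S \<subseteq> {..<CARD('n)} \<and> card S = m \<longrightarrow>
        L j (mono e S) = (if {..<a} \<subseteq> S \<and> S \<subseteq> {..<a + b} then mono E S else 0))" for j e E a b
  have "\<forall>j\<in>{1..k}. \<exists>e E a b. H j e E a b"
    using assms(3) lambda_m_rep unfolding H_def by blast
  then obtain ee where "\<forall>j\<in>{1..k}. \<exists>E a b. H j (ee j) E a b" by (metis bchoice)
  then obtain EE where "\<forall>j\<in>{1..k}. \<exists>a b. H j (ee j) (EE j) a b" by (metis bchoice)
  then obtain aa where "\<forall>j\<in>{1..k}. \<exists>b. H j (ee j) (EE j) (aa j) b" by (metis bchoice)
  then obtain bb where Hj: "\<forall>j\<in>{1..k}. H j (ee j) (EE j) (aa j) (bb j)" by (metis bchoice)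
  have R: "\<And>j. j \<in> {1..k} \<Longrightarrow> rep (Ps j) (ee j) (EE j) (aa j) (bb j)"
    and Llin: "\<And>j. j \<in> {1..k} \<Longrightarrow> lin_on (ext m) (L j)"
    and HL: "\<And>j S. j \<in> {1..k} \<Longrightarrow> S \<subseteq> {..<CARD('n)} \<Longrightarrow> card S = m \<Longrightarrow>
        L j (mono (ee j) S) = (if {..<aa j} \<subseteq> S \<and> S \<subseteq> {..<aa j + bb j} then mono (EE j) S else 0)"
    using Hj unfolding H_def by blast+
  have nzI: "op_nonzero m (L j) \<longleftrightarrow> aa j \<le> m \<and> m \<le> aa j + bb j" if j: "j \<in> {1..k}" for j
    using lam_nonzero_iff[OF rep_e[OF R[OF j]] rep_E[OF R[OF j]] Llin[OF j] m] HL[OF j] by blast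
  have bpos: "bb j > 0" if j: "j \<in> {1..k}" for j
  proof (rule ccontr)
    assume "\<not> bb j > 0"
    hence "Dom (Ps j) \<subseteq> Ker (Ps j)" using rep_b0[OF R[OF j]] by simp
    moreover have "Ker (Ps j) \<subseteq> Dom (Ps j)" by (auto simp: Ker_def Dom_def)
    ultimately have "Dom (Ps j) = Ker (Ps j)" by blast
    thus False using hj[OF j] by (simp add: rk_def)
  qed
  have j1: "1 \<in> {1..k}" and jk: "k \<in> {1..k}" using k1 by auto
  have a1: "aa 1 = 0"
  proof (rule ccontr)
    assume a0: "aa 1 \<noteq> 0"
    have N0: "0 < CARD('n)" using rep_N[OF R[OF j1]] a0 by simp
    have "ee 1 0 \<in> fs.span (ee 1 ` {aa 1..<CARD('n)})" using rep_D1[OF R[OF j1]] hD1 by blast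
    moreover have "ee 1 0 \<notin> fs.span (ee 1 ` {aa 1..<CARD('n)})"
      using a0 N0 by (intro basis_not_in_span[OF rep_e[OF R[OF j1]]]) auto
    ultimately show False by blast
  qed
  have ak: "aa k + bb k = CARD('n)"
  proof (rule ccontr)
    assume "aa k + bb k \<noteq> CARD('n)"
    hence lt: "aa k + bb k < CARD('n)" using rep_N[OF R[OF jk]] by simp
    have "EE k (aa k + bb k) \<in> fs.span (EE k ` {..<aa k + bb k})" using rep_I1[OF R[OF jk]] hIk by blast
    moreover have "EE k (aa k + bb k) \<notin> fs.span (EE k ` {..<aa k + bb k})"
      using lt by (intro basis_not_in_span[OF rep_E[OF R[OF jk]]]) auto
    ultimately show False by blast
  qed
  have chain: "aa (j + 1) = aa j + bb j" if j: "1 \<le> j" "j + 1 \<le> k" for j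
  proof -
    have jj: "j \<in> {1..k}" "j + 1 \<in> {1..k}" using j by auto
    note R0 = R[OF jj(1)] and R1 = R[OF jj(2)]
    have "aa (j + 1) \<le> aa j + bb j"
    proof (rule span_count[OF rep_E[OF R0] rep_E[OF R1]])
      show "aa j + bb j \<le> CARD('n)" "aa (j + 1) \<le> CARD('n)" using rep_N[OF R0] rep_N[OF R1] by auto
      show "EE (j + 1) ` {..<aa (j + 1)} \<subseteq> fs.span (EE j ` {..<aa j + bb j})"
      proof safe
        fix i assume "i < aa (j + 1)"
        hence "EE (j + 1) i \<in> Indef (Ps (j + 1))" by (rule rep_F2[OF R1])
        hence "EE (j + 1) i \<in> Im (Ps j)" using hch[OF j] by simp
        thus "EE (j + 1) i \<in> fs.span (EE j ` {..<aa j + bb j})" by (rule rep_I1[OF R0])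
      qed
    qed
    moreover have "aa j + bb j \<le> aa (j + 1)"
    proof (rule span_count[OF rep_E[OF R1] rep_E[OF R0]])
      show "aa j + bb j \<le> CARD('n)" "aa (j + 1) \<le> CARD('n)" using rep_N[OF R0] rep_N[OF R1] by auto
      show "EE j ` {..<aa j + bb j} \<subseteq> fs.span (EE (j + 1) ` {..<aa (j + 1)})"
      proof safe
        fix i assume "i < aa j + bb j"
        hence "EE j i \<in> Im (Ps j)" by (rule rep_I2[OF R0])
        hence "EE j i \<in> Indef (Ps (j + 1))" using hch[OF j] by simp
        thus "EE j i \<in> fs.span (EE (j + 1) ` {..<aa (j + 1)})" by (rule rep_F1[OF R1])
      qed
    qed
    ultimately show ?thesis by simp
  qed
  have stepF: "\<forall>j. 1 \<le> j \<and> j + 1 \<le> k \<longrightarrow> aa (j + 1) = aa j + bb j" using chain by blast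
  have posF: "\<forall>j\<in>{1..k}. bb j > 0" using bpos by blast
  have ex: "\<exists>j\<in>{1..k}. op_nonzero m (L j)"
    using comb_exists[OF k1, of aa bb, OF a1 stepF ak m] nzI by blast
  have pair: "j' = j + 1 \<and> m = aa j + bb j"
    if jj: "j \<in> {1..k}" "j' \<in> {1..k}" "j < j'" "op_nonzero m (L j)" "op_nonzero m (L j')" for j j'
  proof -
    have I: "aa j \<le> m" "m \<le> aa j + bb j" "aa j' \<le> m" "m \<le> aa j' + bb j'"
      using nzI[OF jj(1)] nzI[OF jj(2)] jj(4,5) by auto
    have mo: "aa j + bb j \<le> aa j' \<and> (j + 1 < j' \<longrightarrow> aa j + bb j < aa j')"
      using comb_mono[OF stepF posF, of j j'] jj by auto
    thus ?thesis using I jj(3) by auto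
  qed
  show ?thesis
  proof (cases "\<exists>!j. j \<in> {1..k} \<and> op_nonzero m (L j)")
    case True
    have "\<not> (\<exists>j. 1 \<le> j \<and> j + 1 \<le> k \<and> op_nonzero m (L j) \<and> op_nonzero m (L (j + 1)))"
    proof
      assume "\<exists>j. 1 \<le> j \<and> j + 1 \<le> k \<and> op_nonzero m (L j) \<and> op_nonzero m (L (j + 1))"
      then obtain j where "1 \<le> j" "j + 1 \<le> k" "op_nonzero m (L j)" "op_nonzero m (L (j + 1))" by blast
      moreover have "j \<in> {1..k}" "j + 1 \<in> {1..k}" using calculation by auto
      ultimately show False using True by (metis n_not_Suc_n Suc_eq_plus1)
    qed
    thus ?thesis unfolding Let_def using True by blast
  next
    case False
    then obtain j0 j1 where j01: "j0 \<in> {1..k}" "j1 \<in> {1..k}" "j0 \<noteq> j1"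
      "op_nonzero m (L j0)" "op_nonzero m (L j1)" using ex by blast
    define j where "j = min j0 j1"
    define j' where "j' = max j0 j1"
    have jj: "j \<in> {1..k}" "j' \<in> {1..k}" "j < j'" "op_nonzero m (L j)" "op_nonzero m (L j')"
      using j01 by (auto simp: j_def j'_def min_def max_def)
    have j'eq: "j' = j + 1" and mj: "m = aa j + bb j" using pair[OF jj] by auto
    have jr: "1 \<le> j" "j + 1 \<le> k" using jj j'eq by auto
    have J0: "j \<in> {1..k}" and J1: "j + 1 \<in> {1..k}" using jr by auto
    have ma: "aa (j + 1) = m" using chain[OF jr] mj by simp
    note R0 = R[OF J0] and R1 = R[OF J1]
    have nz0: "op_nonzero m (L j)" and nz1: "op_nonzero m (L (j + 1))" using jj j'eq by auto
    have others: "\<forall>t\<in>{1..k} - {j, j + 1}. \<not> op_nonzero m (L t)"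
    proof (intro ballI notI)
      fix t assume t: "t \<in> {1..k} - {j, j + 1}" and nzt: "op_nonzero m (L t)"
      show False
      proof (cases "t < j")
        case True
        have "j = t + 1" using pair[of t j] t J0 True nzt nz0 by auto
        moreover have "j + 1 = t + 1" using pair[of t "j + 1"] t J1 True nzt nz1 by auto
        ultimately show False by simp
      next
        case False
        hence "j < t" using t by auto
        hence "t = j + 1" using pair[of j t] t J0 nzt nz0 by auto
        thus False using t by simp
      qed
    qed
    have HL0: "L j (mono (ee j) S) = (if S = {..<m} then mono (EE j) {..<m} else 0)"
      if S: "S \<subseteq> {..<CARD('n)}" "card S = m" for S
    proof -
      have iff: "({..<aa j} \<subseteq> S \<and> S \<subseteq> {..<aa j + bb j}) \<longleftrightarrow> S = {..<m}"
      proof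
        assume "{..<aa j} \<subseteq> S \<and> S \<subseteq> {..<aa j + bb j}"
        hence "S \<subseteq> {..<m}" using mj by simp
        thus "S = {..<m}" using card_eq_lessThan S(2) by blast
      next
        assume "S = {..<m}"
        thus "{..<aa j} \<subseteq> S \<and> S \<subseteq> {..<aa j + bb j}" using mj by auto
      qed
      have "L j (mono (ee j) S) = (if S = {..<m} then mono (EE j) S else 0)"
        using HL[OF J0 S] unfolding iff .
      thus ?thesis by simp
    qed
    have HLgen: "LL (mono e' S) = (if S = {..<m} then mono E' {..<m} else 0)"
      if S: "S \<subseteq> {..<CARD('n)}" "card S = m" and a': "a' = m"
        and H': "\<And>S. S \<subseteq> {..<CARD('n)} \<Longrightarrow> card S = m \<Longrightarrow>
           LL (mono e' S) = (if {..<a'} \<subseteq> S \<and> S \<subseteq> {..<a' + b'} then mono E' S else 0)"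
      for S and LL :: "('n list \<Rightarrow> complex) \<Rightarrow> ('n list \<Rightarrow> complex)"
        and e' E' :: "nat \<Rightarrow> 'n \<Rightarrow> complex" and a' b' :: nat
    proof -
      have fS: "finite S" using S finite_subset by blast
      have iff: "({..<a'} \<subseteq> S \<and> S \<subseteq> {..<a' + b'}) \<longleftrightarrow> S = {..<m}"
      proof
        assume "{..<a'} \<subseteq> S \<and> S \<subseteq> {..<a' + b'}"
        hence "{..<m} \<subseteq> S" using a' by simp
        thus "S = {..<m}" using lessThan_card_eq fS S(2) by blast
      next
        assume "S = {..<m}"
        thus "{..<a'} \<subseteq> S \<and> S \<subseteq> {..<a' + b'}" using a' by auto
      qed
      have "LL (mono e' S) = (if S = {..<m} then mono E' S else 0)"
        using H'[OF S] unfolding iff .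
      thus ?thesis by simp
    qed
    have HL1: "L (j + 1) (mono (ee (j + 1)) S) = (if S = {..<m} then mono (EE (j + 1)) {..<m} else 0)"
      if S: "S \<subseteq> {..<CARD('n)}" "card S = m" for S
      by (rule HLgen[OF S ma]) (rule HL[OF J1])
    have rank0: "op_rank m (L j) = 1"
      by (rule rank_one[OF rep_e[OF R0] Llin[OF J0], of "{..<m}"])
         (use m mono_nonzero[OF rep_E[OF R0], of "{..<m}"] HL0 in auto)
    have rank1: "op_rank m (L (j + 1)) = 1"
      by (rule rank_one[OF rep_e[OF R1] Llin[OF J1], of "{..<m}"])
         (use m mono_nonzero[OF rep_E[OF R1], of "{..<m}"] HL1 in auto)
    have KerSpan: "v \<in> fs.span (ee j ` {m..<CARD('n)})" if "v \<in> Ker (Ps j)" for v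
      using rep_K1[OF R0 that] mj by simp
    have ImSpan: "w \<in> fs.span (EE j ` {..<m})" if "w \<in> Im (Ps j)" for w
      using rep_I1[OF R0 that] mj by simp
    have prop1: "op_propto m (L j) (L (j + 1))"
    proof (rule propto_lemma[OF rep_e[OF R0] rep_E[OF R0] rep_e[OF R1] rep_E[OF R1] m Llin[OF J0] Llin[OF J1] HL0 HL1])
      fix i assume "m \<le> i" "i < CARD('n)"
      hence "ee (j + 1) i \<in> Dom (Ps (j + 1))" using ma by (intro rep_D2[OF R1]) auto
      hence "ee (j + 1) i \<in> Ker (Ps j)" using hch[OF jr] by simp
      thus "ee (j + 1) i \<in> fs.span (ee j ` {m..<CARD('n)})" by (rule KerSpan)
    next
      fix i assume "i < m"
      hence "EE (j + 1) i \<in> Indef (Ps (j + 1))" using ma by (intro rep_F2[OF R1]) auto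
      hence "EE (j + 1) i \<in> Im (Ps j)" using hch[OF jr] by simp
      thus "EE (j + 1) i \<in> fs.span (EE j ` {..<m})" by (rule ImSpan)
    qed
    have z0: "dsum 0 0 \<in> Ps j" using fs.subspace_0[OF rep_subspace[OF R0]] by (simp add: dsum_zero)
    have zK: "0 \<in> Ker (Ps j)" using z0 by (simp add: Ker_def)
    have zI: "0 \<in> Im (Ps j)" using z0 unfolding Im_def by blast
    have propQ: "op_propto m (L j) LQ" if LQ: "lambda_m m (KerIm (Ps j)) LQ" for LQ
    proof -
      obtain eQ EQ aQ bQ where RQ: "rep (KerIm (Ps j)) eQ EQ aQ bQ" and LQl: "lin_on (ext m) LQ"
        and HQ: "\<forall>S. S \<subseteq> {..<CARD('n)} \<and> card S = m \<longrightarrow>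
          LQ (mono eQ S) = (if {..<aQ} \<subseteq> S \<and> S \<subseteq> {..<aQ + bQ} then mono EQ S else 0)"
        using lambda_m_rep[OF LQ] by blast
      have IQ: "Indef (KerIm (Ps j)) = Im (Ps j)" by (rule Indef_KerIm[OF zK])
      have DQ: "Dom (KerIm (Ps j)) = Ker (Ps j)" by (rule Dom_KerIm[OF zI])
      have "aQ \<le> m"
      proof (rule span_count[OF rep_E[OF R0] rep_E[OF RQ]])
        show "m \<le> CARD('n)" "aQ \<le> CARD('n)" using m rep_N[OF RQ] by auto
        show "EQ ` {..<aQ} \<subseteq> fs.span (EE j ` {..<m})"
        proof safe
          fix i assume "i < aQ"
          hence "EQ i \<in> Indef (KerIm (Ps j))" by (rule rep_F2[OF RQ])
          thus "EQ i \<in> fs.span (EE j ` {..<m})" using IQ ImSpan by simp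
        qed
      qed
      moreover have "m \<le> aQ"
      proof (rule span_count[OF rep_E[OF RQ] rep_E[OF R0]])
        show "aQ \<le> CARD('n)" "m \<le> CARD('n)" using m rep_N[OF RQ] by auto
        show "EE j ` {..<m} \<subseteq> fs.span (EQ ` {..<aQ})"
        proof safe
          fix i assume "i < m"
          hence "EE j i \<in> Im (Ps j)" using mj by (intro rep_I2[OF R0]) auto
          hence "EE j i \<in> Indef (KerIm (Ps j))" using IQ by simp
          thus "EE j i \<in> fs.span (EQ ` {..<aQ})" by (rule rep_F1[OF RQ])
        qed
      qed
      ultimately have aQm: "aQ = m" by simp
      have HLQ: "LQ (mono eQ S) = (if S = {..<m} then mono EQ {..<m} else 0)"
        if S: "S \<subseteq> {..<CARD('n)}" "card S = m" for S
        by (rule HLgen[OF S aQm]) (use HQ in blast)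
      show ?thesis
      proof (rule propto_lemma[OF rep_e[OF R0] rep_E[OF R0] rep_e[OF RQ] rep_E[OF RQ] m Llin[OF J0] LQl HL0 HLQ])
        fix i assume "m \<le> i" "i < CARD('n)"
        hence "eQ i \<in> Dom (KerIm (Ps j))" using aQm by (intro rep_D2[OF RQ]) auto
        thus "eQ i \<in> fs.span (ee j ` {m..<CARD('n)})" using DQ KerSpan by simp
      next
        fix i assume "i < m"
        hence "EQ i \<in> Indef (KerIm (Ps j))" using aQm by (intro rep_F2[OF RQ]) auto
        thus "EQ i \<in> fs.span (EE j ` {..<m})" using IQ ImSpan by simp
      qed
    qed
    have B: "\<exists>j. 1 \<le> j \<and> j + 1 \<le> k \<and> op_nonzero m (L j) \<and> op_nonzero m (L (j + 1)) \<and>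
                    (\<forall>t\<in>{1..k} - {j, j + 1}. \<not> op_nonzero m (L t)) \<and>
                    op_rank m (L j) = 1 \<and> op_rank m (L (j + 1)) = 1 \<and>
                    op_propto m (L j) (L (j + 1)) \<and>
                    (\<forall>LQ. lambda_m m (KerIm (Ps j)) LQ \<longrightarrow> op_propto m (L j) LQ)"
      using jr nz0 nz1 others rank0 rank1 prop1 propQ by blast
    show ?thesis unfolding Let_def using False B by blast
  qed
qed


end
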